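(* In the setting described in the context, define \[ W=\frac{1}{2\pi i}\sum_{\gamma\in\Gamma_\star}\bar\Omega(\gamma)\int_{\ell_\gamma}\frac{\mathrm{d}t}{t^2}\,\mathcal{X}_\gamma(t) -\frac{1}{2(2\pi i)^2}\sum_{\gamma,\gamma'\in\Gamma_\star}\bar\Omega(\gamma)\bar\Omega(\gamma')\int_{\ell_\gamma}\frac{\mathrm{d}t}{t^2}\int_{\ell_{\gamma'}}\frac{\mathrm{d}t'}{t'^2}\,\langle\gamma,\gamma'\rangle\frac{t\,t'}{t'-t}\,\mathcal{X}_\gamma(t)\mathcal{X}_{\gamma'}(t'). \] Then $W$ satisfies, for all $a,b=1,\dots,m$, the heavenly equation \[ \frac{\partial^2 W}{\partial z^a\partial\theta^b}-\frac{\partial^2 W}{\partial z^b\partial \theta^a} =\frac{1}{(2\pi)^2} \sum_{c,d=1}^{m}\omega^{cd}\, \frac{\partial^2 W}{\partial \theta^a\partial\theta^c}\, \frac{\partial^2 W}{\partial \theta^b\partial\theta^d}, \] and for every $\gamma\in\Gamma$ and $a=1,\dots,m$, \[ \Big[\frac{\partial}{\partial z^a}+\frac{1}{t}\frac{\partial}{\partial\theta^a}-\frac{1}{(2\pi)^2}\sum_{b,c=1}^m\omega^{bc}\frac{\partial^2 W}{\partial\theta^a\partial\theta^b}\frac{\partial}{\partial\theta^c}\Big]\mathcal{X}_\gamma(t)=0 . \]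
   Context: Let $\Gamma$ be a lattice with basis $\gamma^1,\dots,\gamma^m$, equipped with a skew-symmetric integer pairing $\langle\cdot,\cdot\rangle$ such that the matrix $\omega^{ab}=\langle\gamma^a,\gamma^b\rangle$ is invertible. Write $\gamma=\sum_a q_a\gamma^a$ for $\gamma\in\Gamma$ and $\Gamma_\star=\Gamma\setminus\{0\}$. Let $z=(z^a)$ range over an open subset of $\mathbb{C}^m$ and $\theta=(\theta^a)\in\mathbb{C}^m$; put $Z_\gamma=\sum_a q_a z^a$ and $\theta_\gamma=\sum_a q_a\theta^a$. Let $\sigma:\Gamma\to\mathbb{C}^\times$ be a quadratic refinement, i.e. $\sigma_\gamma\sigma_{\gamma'}=(-1)^{\langle\gamma,\gamma'\rangle}\sigma_{\gamma+\gamma'}$. Let $\bar\Omega:\Gamma_\star\to\mathbb{Q}$ be given numbers (rational DT invariants), independent of $(z,\theta)$ locally, with $Z_\gamma\neq0$ whenever $\bar\Omega(\gamma)\neq 0$. For such $\gamma$ let $\ell_\gamma=\{t\in\mathbb{C}^\times: Z_\gamma/t\in i\mathbb{R}_{<0}\}=\{iZ_\gamma/s: s>0\}$ (the BPS ray), oriented from $t=0$ to $t=\infty$. Let $\mathcal{X}^{\rm sf}_\gamma(t)=\sigma_\gamma e^{2\pi i(\theta_\gamma-Z_\gamma/t)}$. Let $\mathcal{X}_\gamma(t)=\mathcal{X}_\gamma(z,\theta,t)$, $\gamma\in\Gamma$, be a solution of the integral (TBA-type) system \[ \mathcal{X}_\gamma(t)=\mathcal{X}^{\rm sf}_\gamma(t)\exp\Big[\frac{1}{2\pi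 i}\sum_{\gamma'\in\Gamma_\star}\bar\Omega(\gamma')\langle\gamma,\gamma'\rangle\int_{\ell_{\gamma'}}\frac{\mathrm{d}t'}{t'}\frac{t}{t'-t}\,\mathcal{X}_{\gamma'}(t')\Big]. \] Standing convergence assumption (made throughout the paper): all sums over charges and integrals appearing converge, and all manipulations (differentiation under sums and integrals, and inversion of the linearized integral equation by its iterated series) are justified. *)

theory Defs
  imports "HOL-Analysis.Analysis"
begin

text \<open>Charges gamma in the lattice Gamma = Z^m are integer vectors int^'m (coordinates q_a
  w.r.t. the basis gamma^1..gamma^m); the index type 'm is an arbitrary finite type, m = CARD('m).
  z, theta are complex vectors complex^'m.  The skew form is given by the integer matrix
  omega a b = <gamma^a, gamma^b>.\<close>

definition pairing :: "('m::finite \<Rightarrow> 'm \<Rightarrow> int) \<Rightarrow> int^'m \<Rightarrow> int^'m \<Rightarrow> int" where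
  "pairing \<omega> g h = (\<Sum>a\<in>UNIV. \<Sum>b\<in>UNIV. g$a * h$b * \<omega> a b)"

definition Zc :: "complex^'m::finite \<Rightarrow> int^'m \<Rightarrow> complex" where
  "Zc z g = (\<Sum>a\<in>UNIV. of_int (g$a) * z$a)"

definition Gstar :: "(int^'m::finite) set" where
  "Gstar = {g. g \<noteq> 0}"

definition onray :: "complex \<Rightarrow> complex \<Rightarrow> bool" where
  "onray Zg t \<longleftrightarrow> (\<exists>s::real. s > 0 \<and> t = \<i> * Zg / of_real s)"

text \<open>Contour integral along l_gamma oriented from 0 to infinity, parametrised by
  t = i Z_gamma u, u in (0,oo), dt = i Z_gamma du (Lebesgue/Bochner integral).\<close>
definition rayint :: "complex \<Rightarrow> (complex \<Rightarrow> complex) \<Rightarrow> complex" where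
  "rayint Zg f = (LINT u:{0<..}|lborel. \<i> * Zg * f (\<i> * Zg * of_real u))"

definition ray_ok :: "complex \<Rightarrow> (complex \<Rightarrow> complex) \<Rightarrow> bool" where
  "ray_ok Zg f \<longleftrightarrow> set_integrable lborel {0<..} (\<lambda>u::real. \<i> * Zg * f (\<i> * Zg * of_real u))"

definition ray_norm :: "complex \<Rightarrow> (complex \<Rightarrow> complex) \<Rightarrow> real" where
  "ray_norm Zg f = (LINT u:{0<..}|lborel. norm (\<i> * Zg * f (\<i> * Zg * of_real u)))"

definition ray2_ok :: "complex \<Rightarrow> complex \<Rightarrow> (complex \<Rightarrow> complex \<Rightarrow> complex) \<Rightarrow> bool" where
  "ray2_ok Zg Zh H \<longleftrightarrow> set_integrable (lborel \<Otimes>\<^sub>M lborel) ({0<..} \<times> {0<..})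
     (\<lambda>(u::real, v::real). (\<i> * Zg) * (\<i> * Zh) * H (\<i> * Zg * of_real u) (\<i> * Zh * of_real v))"

definition ray2_norm :: "complex \<Rightarrow> complex \<Rightarrow> (complex \<Rightarrow> complex \<Rightarrow> complex) \<Rightarrow> real" where
  "ray2_norm Zg Zh H = (LINT p:({0<..} \<times> {0<..})|(lborel \<Otimes>\<^sub>M lborel).
     norm ((\<i> * Zg) * (\<i> * Zh) * H (\<i> * Zg * of_real (fst p)) (\<i> * Zh * of_real (snd p))))"

definition Xsf :: "(int^'m::finite \<Rightarrow> complex) \<Rightarrow> complex^'m \<Rightarrow> complex^'m \<Rightarrow> int^'m \<Rightarrow> complex \<Rightarrow> complex" where
  "Xsf \<sigma> z \<theta> g t = \<sigma> g * exp (2 * pi * \<i> * (Zc \<theta> g - Zc z g / t))"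

definition LinOp :: "('m::finite \<Rightarrow> 'm \<Rightarrow> int) \<Rightarrow> (int^'m \<Rightarrow> rat) \<Rightarrow> complex^'m
    \<Rightarrow> (int^'m \<Rightarrow> complex \<Rightarrow> complex) \<Rightarrow> int^'m \<Rightarrow> complex \<Rightarrow> complex" where
  "LinOp \<omega> \<Omega> z Y g t = (1 / (2 * pi * \<i>)) *
     (\<Sum>\<^sub>\<infinity>h\<in>Gstar. of_rat (\<Omega> h) * of_int (pairing \<omega> g h) *
        rayint (Zc z h) (\<lambda>t'. (1 / t') * (t / (t' - t)) * Y h t'))"

definition adm :: "('m::finite \<Rightarrow> 'm \<Rightarrow> int) \<Rightarrow> (int^'m \<Rightarrow> rat) \<Rightarrow> complex^'m \<Rightarrow> int^'m \<Rightarrow> complex \<Rightarrow> bool" where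
  "adm \<omega> \<Omega> z g t \<longleftrightarrow> t \<noteq> 0 \<and>
     (\<forall>h\<in>Gstar. \<Omega> h \<noteq> 0 \<and> pairing \<omega> g h \<noteq> 0 \<longrightarrow> \<not> onray (Zc z h) t)"

definition Wfun :: "('m::finite \<Rightarrow> 'm \<Rightarrow> int) \<Rightarrow> (int^'m \<Rightarrow> rat)
    \<Rightarrow> (int^'m \<Rightarrow> complex^'m \<Rightarrow> complex^'m \<Rightarrow> complex \<Rightarrow> complex) \<Rightarrow> complex^'m \<Rightarrow> complex^'m \<Rightarrow> complex" where
  "Wfun \<omega> \<Omega> X z \<theta> =
     (1 / (2 * pi * \<i>)) * (\<Sum>\<^sub>\<infinity>g\<in>Gstar. of_rat (\<Omega> g) * rayint (Zc z g) (\<lambda>t. X g z \<theta> t / t^2))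
   - (1 / (2 * (2 * pi * \<i>)^2)) *
     infsum (\<lambda>(g, h). of_rat (\<Omega> g) * of_rat (\<Omega> h) *
        rayint (Zc z g) (\<lambda>t. rayint (Zc z h) (\<lambda>t'.
           (1 / t^2) * (1 / t'^2) * of_int (pairing \<omega> g h) * (t * t' / (t' - t)) * X g z \<theta> t * X h z \<theta> t')))
       (Gstar \<times> Gstar)"

definition vupd :: "'a^'m \<Rightarrow> 'm \<Rightarrow> 'a \<Rightarrow> 'a^'m" where
  "vupd v a w = (\<chi> i. if i = a then w else v$i)"

definition dz :: "'m::finite \<Rightarrow> (complex^'m \<Rightarrow> complex^'m \<Rightarrow> complex) \<Rightarrow> complex^'m \<Rightarrow> complex^'m \<Rightarrow> complex" where
  "dz a F z \<theta> = deriv (\<lambda>w. F (vupd z a w) \<theta>) (z$a)"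

definition dth :: "'m::finite \<Rightarrow> (complex^'m \<Rightarrow> complex^'m \<Rightarrow> complex) \<Rightarrow> complex^'m \<Rightarrow> complex^'m \<Rightarrow> complex" where
  "dth a F z \<theta> = deriv (\<lambda>w. F z (vupd \<theta> a w)) (\<theta>$a)"

definition dzX :: "'m::finite \<Rightarrow> (int^'m \<Rightarrow> complex^'m \<Rightarrow> complex^'m \<Rightarrow> complex \<Rightarrow> complex)
    \<Rightarrow> int^'m \<Rightarrow> complex^'m \<Rightarrow> complex^'m \<Rightarrow> complex \<Rightarrow> complex" where
  "dzX a X g z \<theta> t = dz a (\<lambda>z' \<theta>'. X g z' \<theta>' t) z \<theta>"

definition dthX :: "'m::finite \<Rightarrow> (int^'m \<Rightarrow> complex^'m \<Rightarrow> complex^'m \<Rightarrow> complex \<Rightarrow> complex)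
    \<Rightarrow> int^'m \<Rightarrow> complex^'m \<Rightarrow> complex^'m \<Rightarrow> complex \<Rightarrow> complex" where
  "dthX a X g z \<theta> t = dth a (\<lambda>z' \<theta>'. X g z' \<theta>' t) z \<theta>"

definition Sfun :: "(int^'m::finite \<Rightarrow> rat) \<Rightarrow> complex^'m \<Rightarrow> (int^'m \<Rightarrow> complex \<Rightarrow> complex) \<Rightarrow> complex" where
  "Sfun \<Omega> z F = (\<Sum>\<^sub>\<infinity>g\<in>Gstar. of_rat (\<Omega> g) * rayint (Zc z g) (F g))"

definition Dfun :: "('m::finite \<Rightarrow> 'm \<Rightarrow> int) \<Rightarrow> (int^'m \<Rightarrow> rat) \<Rightarrow> complex^'m
    \<Rightarrow> (int^'m \<Rightarrow> complex \<Rightarrow> complex) \<Rightarrow> (int^'m \<Rightarrow> complex \<Rightarrow> complex) \<Rightarrow> complex" where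
  "Dfun \<omega> \<Omega> z F G = infsum (\<lambda>(g, h). of_rat (\<Omega> g) * of_rat (\<Omega> h) *
        rayint (Zc z g) (\<lambda>t. rayint (Zc z h) (\<lambda>t'.
           (1 / t^2) * (1 / t'^2) * of_int (pairing \<omega> g h) * (t * t' / (t' - t)) * F g t * G h t')))
       (Gstar \<times> Gstar)"

text \<open>Charge weight 1 + sum_a |q_a| (so that sums weighted by charge components converge).\<close>
definition cw :: "int^'m::finite \<Rightarrow> real" where
  "cw g = 1 + (\<Sum>a\<in>UNIV. of_int \<bar>g$a\<bar>)"

definition abs_single :: "(int^'m::finite \<Rightarrow> rat) \<Rightarrow> complex^'m \<Rightarrow> (int^'m \<Rightarrow> complex \<Rightarrow> complex) \<Rightarrow> bool" where
  "abs_single \<Omega> z F \<longleftrightarrow>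
     (\<forall>g\<in>Gstar. \<Omega> g \<noteq> 0 \<longrightarrow> ray_ok (Zc z g) (F g)) \<and>
     (\<lambda>g. cw g * of_rat \<bar>\<Omega> g\<bar> * ray_norm (Zc z g) (F g)) summable_on Gstar"

definition abs_lin :: "('m::finite \<Rightarrow> 'm \<Rightarrow> int) \<Rightarrow> (int^'m \<Rightarrow> rat) \<Rightarrow> complex^'m
    \<Rightarrow> int^'m \<Rightarrow> complex \<Rightarrow> (int^'m \<Rightarrow> complex \<Rightarrow> complex) \<Rightarrow> bool" where
  "abs_lin \<omega> \<Omega> z g t Y \<longleftrightarrow>
     (\<forall>h\<in>Gstar. \<Omega> h \<noteq> 0 \<and> pairing \<omega> g h \<noteq> 0 \<longrightarrow>
        ray_ok (Zc z h) (\<lambda>t'. (1 / t') * (t / (t' - t)) * Y h t')) \<and>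
     (\<lambda>h. of_rat \<bar>\<Omega> h\<bar> * of_int \<bar>pairing \<omega> g h\<bar> *
        ray_norm (Zc z h) (\<lambda>t'. (1 / t') * (t / (t' - t)) * Y h t')) summable_on Gstar"

definition abs_double :: "('m::finite \<Rightarrow> 'm \<Rightarrow> int) \<Rightarrow> (int^'m \<Rightarrow> rat) \<Rightarrow> complex^'m
    \<Rightarrow> (int^'m \<Rightarrow> complex \<Rightarrow> complex) \<Rightarrow> (int^'m \<Rightarrow> complex \<Rightarrow> complex) \<Rightarrow> bool" where
  "abs_double \<omega> \<Omega> z F G \<longleftrightarrow>
     (\<forall>g\<in>Gstar. \<forall>h\<in>Gstar. \<Omega> g \<noteq> 0 \<and> \<Omega> h \<noteq> 0 \<and> pairing \<omega> g h \<noteq> 0 \<longrightarrow>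
        ray2_ok (Zc z g) (Zc z h) (\<lambda>t t'. (1 / t^2) * (1 / t'^2) * (t * t' / (t' - t)) * F g t * G h t')) \<and>
     (\<lambda>(g, h). of_rat \<bar>\<Omega> g\<bar> * of_rat \<bar>\<Omega> h\<bar> * of_int \<bar>pairing \<omega> g h\<bar> *
        ray2_norm (Zc z g) (Zc z h) (\<lambda>t t'. (1 / t^2) * (1 / t'^2) * (t * t' / (t' - t)) * F g t * G h t'))
       summable_on (Gstar \<times> Gstar)"

end

theory Submission
  imports Defs
begin

definition Iray :: "complex \<Rightarrow> (complex \<Rightarrow> complex) \<Rightarrow> real \<Rightarrow> complex" where
  "Iray Z f u = indicator {0<..} u *\<^sub>R (\<i> * Z * f (\<i> * Z * of_real u))"

lemma rayint_I: "rayint Z f = lebesgue_integral lborel (Iray Z f)"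
  unfolding rayint_def set_lebesgue_integral_def Iray_def[abs_def] by (rule refl)

lemma ray_ok_I: "ray_ok Z f \<longleftrightarrow> integrable lborel (Iray Z f)"
  unfolding ray_ok_def set_integrable_def Iray_def[abs_def] by (rule refl)

lemma ray_norm_I: "ray_norm Z f = lebesgue_integral lborel (\<lambda>u. norm (Iray Z f u))"
  unfolding ray_norm_def set_lebesgue_integral_def Iray_def
  by (rule arg_cong[where f="lebesgue_integral lborel"]) (auto simp: indicator_def)

lemma ray_norm_nonneg: "ray_norm Z f \<ge> 0"
  unfolding ray_norm_I by (rule Bochner_Integration.integral_nonneg) auto

lemma Iray_cong:
  assumes "\<And>u. u > 0 \<Longrightarrow> f (\<i> * Z * of_real u) = g (\<i> * Z * of_real u)"
  shows "Iray Z f = Iray Z g"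
  using assms by (auto simp: Iray_def indicator_def fun_eq_iff)

lemma Iray_add: "Iray Z (\<lambda>t. f t + g t) = (\<lambda>u. Iray Z f u + Iray Z g u)"
  by (auto simp: Iray_def fun_eq_iff algebra_simps)

lemma Iray_cmult: "Iray Z (\<lambda>t. c * f t) = (\<lambda>u. c * Iray Z f u)"
  by (auto simp: Iray_def fun_eq_iff algebra_simps)

lemma Iray_zero: "Iray Z (\<lambda>t. 0) = (\<lambda>u. 0)"
  by (auto simp: Iray_def fun_eq_iff)

lemma rayint_norm: "norm (rayint Z f) \<le> ray_norm Z f"
  unfolding rayint_I ray_norm_I by (rule integral_norm_bound)

lemma rayint_add: "ray_ok Z f \<Longrightarrow> ray_ok Z g \<Longrightarrow>
   rayint Z (\<lambda>t. f t + g t) = rayint Z f + rayint Z g \<and> ray_ok Z (\<lambda>t. f t + g t) \<and>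
   ray_norm Z (\<lambda>t. f t + g t) \<le> ray_norm Z f + ray_norm Z g"
  unfolding rayint_I ray_ok_I ray_norm_I Iray_add
proof (intro conjI)
  assume a: "integrable lborel (Iray Z f)" "integrable lborel (Iray Z g)"
  show "integral\<^sup>L lborel (\<lambda>u. Iray Z f u + Iray Z g u) = integral\<^sup>L lborel (Iray Z f) + integral\<^sup>L lborel (Iray Z g)"
    using a by (rule Bochner_Integration.integral_add)
  show "integrable lborel (\<lambda>u. Iray Z f u + Iray Z g u)" using a by (rule Bochner_Integration.integrable_add)
  have "(LINT u|lborel. norm (Iray Z f u + Iray Z g u)) \<le> (LINT u|lborel. norm (Iray Z f u) + norm (Iray Z g u))"
    using a by (intro Bochner_Integration.integral_mono) (auto intro: Bochner_Integration.integrable_add norm_triangle_ineq)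
  also have "\<dots> = (LINT u|lborel. norm (Iray Z f u)) + (LINT u|lborel. norm (Iray Z g u))"
    using a by (intro Bochner_Integration.integral_add) auto
  finally show "(LINT u|lborel. norm (Iray Z f u + Iray Z g u)) \<le> (LINT u|lborel. norm (Iray Z f u)) + (LINT u|lborel. norm (Iray Z g u))" .
qed

lemma rayint_cmult: "rayint Z (\<lambda>t. c * f t) = c * rayint Z f"
  unfolding rayint_I Iray_cmult by (rule integral_mult_right_zero)

lemma ray_norm_cmult: "ray_norm Z (\<lambda>t. c * f t) = norm c * ray_norm Z f"
  unfolding ray_norm_I Iray_cmult by (simp add: norm_mult)

lemma ray_ok_cmult: "ray_ok Z f \<Longrightarrow> ray_ok Z (\<lambda>t. c * f t)"
  unfolding ray_ok_I Iray_cmult by (rule integrable_mult_right) 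

lemma ray_ok_zero: "ray_ok Z (\<lambda>t. 0)" and rayint_zero: "rayint Z (\<lambda>t. 0) = 0"
  and ray_norm_zero: "ray_norm Z (\<lambda>t. 0) = 0"
  unfolding ray_ok_I rayint_I ray_norm_I Iray_zero by auto

lemma ray_cong:
  assumes "\<And>u. u > 0 \<Longrightarrow> f (\<i> * Z * of_real u) = g (\<i> * Z * of_real u)"
  shows "rayint Z f = rayint Z g" "ray_ok Z f = ray_ok Z g" "ray_norm Z f = ray_norm Z g"
  using Iray_cong[where Z=Z and f=f and g=g, OF assms] unfolding rayint_I ray_ok_I ray_norm_I by auto


lemma of_rat_cplx: "(of_rat q :: complex) = of_real (of_rat q)"
  by (cases q) (simp add: of_rat_rat)
lemma norm_of_rat_c: "norm (of_rat q :: complex) = of_rat \<bar>q\<bar>"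
  by (simp add: of_rat_cplx abs_if of_rat_minus)

definition genok :: "complex^'m::finite \<Rightarrow> (int^'m \<Rightarrow> complex) \<Rightarrow> (int^'m \<Rightarrow> complex \<Rightarrow> complex) \<Rightarrow> bool" where
  "genok z w F \<longleftrightarrow> (\<forall>h\<in>Gstar. w h \<noteq> 0 \<longrightarrow> ray_ok (Zc z h) (F h)) \<and>
     (\<lambda>h. norm (w h) * ray_norm (Zc z h) (F h)) summable_on Gstar"

definition GS :: "complex^'m::finite \<Rightarrow> (int^'m \<Rightarrow> complex) \<Rightarrow> (int^'m \<Rightarrow> complex \<Rightarrow> complex) \<Rightarrow> complex" where
  "GS z w F = (\<Sum>\<^sub>\<infinity>h\<in>Gstar. w h * rayint (Zc z h) (F h))"

lemma GS_summable: fixes z :: "complex^'m::finite" assumes "genok z w F" shows "(\<lambda>h. w h * rayint (Zc z h) (F h)) summable_on Gstar"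
proof -
  have s: "(\<lambda>h. norm (w h) * ray_norm (Zc z h) (F h)) summable_on Gstar" using assms unfolding genok_def by blast
  have "Infinite_Sum.abs_summable_on (\<lambda>h. w h * rayint (Zc z h) (F h)) Gstar"
  proof (rule Infinite_Sum.abs_summable_on_comparison_test'[OF s])
    fix h :: "int^'m"
    have "norm (rayint (Zc z h) (F h)) \<le> ray_norm (Zc z h) (F h)" by (rule rayint_norm)
    then show "norm (w h * rayint (Zc z h) (F h)) \<le> norm (w h) * ray_norm (Zc z h) (F h)"
      unfolding norm_mult by (rule mult_left_mono) simp
  qed
  then show ?thesis by (rule abs_summable_summable)
qed

lemma GS_add:
  fixes z :: "complex^'m::finite"
  assumes "genok z w F" "genok z w G"
  shows "genok z w (\<lambda>h t. F h t + G h t) \<and> GS z w (\<lambda>h t. F h t + G h t) = GS z w F + GS z w G"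
proof
  show "genok z w (\<lambda>h t. F h t + G h t)"
    unfolding genok_def
  proof (intro conjI ballI impI)
    fix h :: "int^'m" assume "h \<in> Gstar" "w h \<noteq> 0"
    then show "ray_ok (Zc z h) (\<lambda>t. F h t + G h t)" using assms rayint_add unfolding genok_def by blast
  next
    show "(\<lambda>h. norm (w h) * ray_norm (Zc z h) (\<lambda>t. F h t + G h t)) summable_on Gstar"
    proof (rule summable_on_comparison_test)
      show "(\<lambda>h. norm (w h) * ray_norm (Zc z h) (F h) + norm (w h) * ray_norm (Zc z h) (G h)) summable_on Gstar"
        using assms unfolding genok_def by (intro summable_on_add) auto
    next
      fix h :: "int^'m" assume h: "h \<in> Gstar"
      show "0 \<le> norm (w h) * ray_norm (Zc z h) (\<lambda>t. F h t + G h t)" by (simp add: ray_norm_nonneg)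
      show "norm (w h) * ray_norm (Zc z h) (\<lambda>t. F h t + G h t) \<le> norm (w h) * ray_norm (Zc z h) (F h) + norm (w h) * ray_norm (Zc z h) (G h)"
      proof (cases "w h = 0")
        case False
        then have "ray_norm (Zc z h) (\<lambda>t. F h t + G h t) \<le> ray_norm (Zc z h) (F h) + ray_norm (Zc z h) (G h)"
          using assms h rayint_add unfolding genok_def by blast
        from mult_left_mono[OF this norm_ge_zero[of "w h"]] show ?thesis by (simp add: distrib_left)
      qed simp
    qed
  qed
  have "GS z w (\<lambda>h t. F h t + G h t) = (\<Sum>\<^sub>\<infinity>h\<in>Gstar. w h * rayint (Zc z h) (F h) + w h * rayint (Zc z h) (G h))"
    unfolding GS_def
  proof (rule infsum_cong)
    fix h :: "int^'m" assume h: "h \<in> Gstar"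
    show "w h * rayint (Zc z h) (\<lambda>t. F h t + G h t) = w h * rayint (Zc z h) (F h) + w h * rayint (Zc z h) (G h)"
    proof (cases "w h = 0")
      case False
      then show ?thesis using assms h rayint_add[of "Zc z h" "F h" "G h"] unfolding genok_def
        by (simp add: distrib_left)
    qed simp
  qed
  also have "\<dots> = GS z w F + GS z w G" unfolding GS_def
    using assms by (intro infsum_add GS_summable)
  finally show "GS z w (\<lambda>h t. F h t + G h t) = GS z w F + GS z w G" .
qed

lemma GS_cmult:
  fixes z :: "complex^'m::finite"
  assumes "genok z w F"
  shows "genok z w (\<lambda>h t. c * F h t)" 
  unfolding genok_def ray_norm_cmult
proof (intro conjI)
  show "\<forall>h\<in>Gstar. w h \<noteq> 0 \<longrightarrow> ray_ok (Zc z h) (\<lambda>t. c * F h t)"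
    using assms unfolding genok_def by (simp add: ray_ok_cmult)
  have "(\<lambda>h. norm c * (norm (w h) * ray_norm (Zc z h) (F h))) summable_on Gstar"
    using assms unfolding genok_def by (intro summable_on_cmult_right) simp
  then show "(\<lambda>h. norm (w h) * (norm c * ray_norm (Zc z h) (F h))) summable_on Gstar"
    by (simp only: mult.left_commute[of "norm c"])
qed

lemma GS_cmult_eq: fixes z :: "complex^'m::finite" shows "GS z w (\<lambda>h t. c * F h t) = c * GS z w F"
proof -
  have "\<And>h. w h * (c * rayint (Zc z h) (F h)) = c * (w h * rayint (Zc z h) (F h))" by simp
  then show ?thesis unfolding GS_def rayint_cmult by (simp only: infsum_cmult_right')
qed

lemma GS_zero: fixes z :: "complex^'m::finite" shows "genok z w (\<lambda>h t. 0)" "GS z w (\<lambda>h t. 0) = 0"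
  unfolding genok_def GS_def by (auto simp: ray_ok_zero rayint_zero ray_norm_zero)

lemma GS_sum:
  fixes z :: "complex^'m::finite"
  assumes "finite I" "\<And>i. i \<in> I \<Longrightarrow> genok z w (F i)"
  shows "genok z w (\<lambda>h t. \<Sum>i\<in>I. F i h t) \<and> GS z w (\<lambda>h t. \<Sum>i\<in>I. F i h t) = (\<Sum>i\<in>I. GS z w (F i))"
  using assms
proof (induction I rule: finite_induct)
  case empty
  show ?case by (simp add: GS_zero)
next
  case (insert x I)
  then have a: "genok z w (F x)" "genok z w (\<lambda>h t. \<Sum>i\<in>I. F i h t)"
     "GS z w (\<lambda>h t. \<Sum>i\<in>I. F i h t) = (\<Sum>i\<in>I. GS z w (F i))" by auto
  show ?case using GS_add[OF a(1,2)] a(3) insert(1,2) by simp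
qed

lemma GS_cong:
  fixes z :: "complex^'m::finite"
  assumes "\<And>h u. h \<in> Gstar \<Longrightarrow> w h \<noteq> 0 \<Longrightarrow> u > 0 \<Longrightarrow>
     F h (\<i> * Zc z h * of_real u) = G h (\<i> * Zc z h * of_real u)"
  shows "genok z w F = genok z w G" "GS z w F = GS z w G"
proof -
  have e: "\<And>h. h \<in> Gstar \<Longrightarrow> w h \<noteq> 0 \<Longrightarrow> rayint (Zc z h) (F h) = rayint (Zc z h) (G h) \<and>
      ray_ok (Zc z h) (F h) = ray_ok (Zc z h) (G h) \<and> ray_norm (Zc z h) (F h) = ray_norm (Zc z h) (G h)"
  proof -
    fix h :: "int^'m" assume h: "h \<in> Gstar" "w h \<noteq> 0"
    have "\<And>u. u > 0 \<Longrightarrow> F h (\<i> * Zc z h * of_real u) = G h (\<i> * Zc z h * of_real u)"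
      using assms h by blast
    from ray_cong[where Z="Zc z h" and f="F h" and g="G h", OF this]
    show "rayint (Zc z h) (F h) = rayint (Zc z h) (G h) \<and>
      ray_ok (Zc z h) (F h) = ray_ok (Zc z h) (G h) \<and> ray_norm (Zc z h) (F h) = ray_norm (Zc z h) (G h)" by blast
  qed
  have s: "(\<lambda>h. norm (w h) * ray_norm (Zc z h) (F h)) summable_on Gstar \<longleftrightarrow>
           (\<lambda>h. norm (w h) * ray_norm (Zc z h) (G h)) summable_on Gstar"
  proof (rule summable_on_cong)
    fix h :: "int^'m" assume "h \<in> Gstar" then show "norm (w h) * ray_norm (Zc z h) (F h) = norm (w h) * ray_norm (Zc z h) (G h)"
      using e[of h] by (cases "w h = 0") simp_all
  qed
  show "genok z w F = genok z w G" unfolding genok_def using s e by blast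
  show "GS z w F = GS z w G" unfolding GS_def
  proof (rule infsum_cong)
    fix h :: "int^'m" assume "h \<in> Gstar" then show "w h * rayint (Zc z h) (F h) = w h * rayint (Zc z h) (G h)"
      using e[of h] by (cases "w h = 0") simp_all
  qed
qed

lemma GS_inner:
  fixes z :: "complex^'m::finite"
  assumes "genok z (\<lambda>h. w h * a h) F"
  shows "genok z w (\<lambda>h t. a h * F h t)" "GS z w (\<lambda>h t. a h * F h t) = GS z (\<lambda>h. w h * a h) F"
proof -
  show "genok z w (\<lambda>h t. a h * F h t)"
    unfolding genok_def ray_norm_cmult
  proof (intro conjI ballI impI)
    fix h :: "int^'m" assume h: "h \<in> Gstar" "w h \<noteq> 0"
    show "ray_ok (Zc z h) (\<lambda>t. a h * F h t)"
    proof (cases "a h = 0")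
      case True then show ?thesis using ray_ok_zero by simp
    next
      case False then show ?thesis using assms h unfolding genok_def by (simp add: ray_ok_cmult)
    qed
  next
    show "(\<lambda>h. norm (w h) * (norm (a h) * ray_norm (Zc z h) (F h))) summable_on Gstar"
      using assms unfolding genok_def by (simp add: norm_mult mult.assoc)
  qed
  show "GS z w (\<lambda>h t. a h * F h t) = GS z (\<lambda>h. w h * a h) F"
    unfolding GS_def rayint_cmult by (simp add: mult.assoc)
qed

lemma GS_wadd:
  fixes z :: "complex^'m::finite"
  assumes "genok z w1 F" "genok z w2 F"
  shows "genok z (\<lambda>h. w1 h + w2 h) F \<and> GS z (\<lambda>h. w1 h + w2 h) F = GS z w1 F + GS z w2 F"
proof
  show "genok z (\<lambda>h. w1 h + w2 h) F"
    unfolding genok_def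
  proof (intro conjI ballI impI)
    fix h :: "int^'m" assume "h \<in> Gstar" "w1 h + w2 h \<noteq> 0"
    then show "ray_ok (Zc z h) (F h)" using assms unfolding genok_def by force
  next
    show "(\<lambda>h. norm (w1 h + w2 h) * ray_norm (Zc z h) (F h)) summable_on Gstar"
    proof (rule summable_on_comparison_test)
      show "(\<lambda>h. norm (w1 h) * ray_norm (Zc z h) (F h) + norm (w2 h) * ray_norm (Zc z h) (F h)) summable_on Gstar"
        using assms unfolding genok_def by (intro summable_on_add) auto
    next
      fix h :: "int^'m"
      show "0 \<le> norm (w1 h + w2 h) * ray_norm (Zc z h) (F h)" by (simp add: ray_norm_nonneg)
      have "norm (w1 h + w2 h) * ray_norm (Zc z h) (F h) \<le> (norm (w1 h) + norm (w2 h)) * ray_norm (Zc z h) (F h)"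
        by (intro mult_right_mono norm_triangle_ineq ray_norm_nonneg)
      then show "norm (w1 h + w2 h) * ray_norm (Zc z h) (F h) \<le> norm (w1 h) * ray_norm (Zc z h) (F h) + norm (w2 h) * ray_norm (Zc z h) (F h)"
        by (simp add: distrib_right)
    qed
  qed
  show "GS z (\<lambda>h. w1 h + w2 h) F = GS z w1 F + GS z w2 F"
    unfolding GS_def distrib_right using assms by (intro infsum_add GS_summable)
qed

lemma GS_wcmult:
  fixes z :: "complex^'m::finite"
  assumes "genok z w F"
  shows "genok z (\<lambda>h. c * w h) F" "GS z (\<lambda>h. c * w h) F = c * GS z w F"
proof -
  show "genok z (\<lambda>h. c * w h) F" using assms unfolding genok_def
    by (simp add: norm_mult mult.assoc summable_on_cmult_right)
  show "GS z (\<lambda>h. c * w h) F = c * GS z w F" unfolding GS_def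
    by (simp add: mult.assoc infsum_cmult_right')
qed

lemma GS_wsum:
  fixes z :: "complex^'m::finite"
  assumes "finite I" "\<And>i. i \<in> I \<Longrightarrow> genok z (w i) F"
  shows "genok z (\<lambda>h. \<Sum>i\<in>I. w i h) F \<and> GS z (\<lambda>h. \<Sum>i\<in>I. w i h) F = (\<Sum>i\<in>I. GS z (w i) F)"
  using assms
proof (induction I rule: finite_induct)
  case empty
  then show ?case unfolding genok_def GS_def by auto
next
  case (insert x I)
  then have a: "genok z (w x) F" "genok z (\<lambda>h. \<Sum>i\<in>I. w i h) F"
     "GS z (\<lambda>h. \<Sum>i\<in>I. w i h) F = (\<Sum>i\<in>I. GS z (w i) F)" by auto
  show ?case using GS_wadd[OF a(1,2)] a(3) insert(1,2) by simp
qed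

lemma cw_ge1: "cw g \<ge> 1"
  unfolding cw_def by (simp add: sum_nonneg)

lemma cw_comp: "\<bar>of_int (g$a)\<bar> \<le> cw g"
proof -
  have "of_int \<bar>g$a\<bar> \<le> (\<Sum>b\<in>UNIV. of_int \<bar>g$b\<bar> :: real)"
    by (rule member_le_sum) auto
  then show ?thesis unfolding cw_def by simp
qed

lemma abs_single_genok:
  fixes z :: "complex^'m::finite"
  assumes "abs_single \<Omega> z F" "\<And>h. h \<in> Gstar \<Longrightarrow> norm (w h) \<le> C * (cw h * of_rat \<bar>\<Omega> h\<bar>)"
  shows "genok z w F"
  unfolding genok_def
proof (intro conjI ballI impI)
  fix h :: "int^'m" assume h: "h \<in> Gstar" "w h \<noteq> 0"
  have "\<Omega> h \<noteq> 0" using assms(2)[OF h(1)] h(2) by auto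
  then show "ray_ok (Zc z h) (F h)" using assms(1) h unfolding abs_single_def by auto
next
  show "(\<lambda>h. norm (w h) * ray_norm (Zc z h) (F h)) summable_on Gstar"
  proof (rule summable_on_comparison_test)
    show "(\<lambda>h. C * (cw h * of_rat \<bar>\<Omega> h\<bar> * ray_norm (Zc z h) (F h))) summable_on Gstar"
      using assms(1) unfolding abs_single_def by (intro summable_on_cmult_right) auto
  next
    fix h :: "int^'m" assume "h \<in> Gstar"
    then show "norm (w h) * ray_norm (Zc z h) (F h) \<le> C * (cw h * of_rat \<bar>\<Omega> h\<bar> * ray_norm (Zc z h) (F h))"
      using mult_right_mono[OF assms(2)[OF \<open>h \<in> Gstar\<close>] ray_norm_nonneg[of "Zc z h" "F h"]] by (simp add: mult.assoc)
  qed (simp add: ray_norm_nonneg)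
qed

lemma Sfun_GS: "Sfun \<Omega> z F = GS z (\<lambda>g. of_rat (\<Omega> g)) F"
  unfolding Sfun_def GS_def ..

lemma LinOp_GS: "LinOp \<omega> \<Omega> z Y g t = (1 / (2 * pi * \<i>)) *
   GS z (\<lambda>h. of_rat (\<Omega> h) * of_int (pairing \<omega> g h)) (\<lambda>h t'. (1 / t') * (t / (t' - t)) * Y h t')"
  unfolding LinOp_def GS_def ..

lemma abs_lin_genok: "abs_lin \<omega> \<Omega> z g t Y \<longleftrightarrow>
   genok z (\<lambda>h. of_rat (\<Omega> h) * of_int (pairing \<omega> g h)) (\<lambda>h t'. (1 / t') * (t / (t' - t)) * Y h t')"
  unfolding abs_lin_def genok_def by (simp add: norm_mult norm_of_rat_c)

lemma abs_single_genok1: fixes z :: "complex^'m::finite" shows "abs_single \<Omega> z F \<Longrightarrow> genok z (\<lambda>g. of_rat (\<Omega> g)) F"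
proof (erule abs_single_genok[where C=1])
  fix h :: "int^'m" 
  have "of_rat \<bar>\<Omega> h\<bar> \<le> cw h * of_rat \<bar>\<Omega> h\<bar>"
    using mult_right_mono[OF cw_ge1, of "of_rat \<bar>\<Omega> h\<bar>" h] by simp
  then show "norm (of_rat (\<Omega> h) :: complex) \<le> 1 * (cw h * of_rat \<bar>\<Omega> h\<bar>)" by (simp add: norm_of_rat_c)
qed


definition Q2 :: "complex \<Rightarrow> complex \<Rightarrow> (complex \<Rightarrow> complex \<Rightarrow> complex) \<Rightarrow> real \<times> real \<Rightarrow> complex" where
  "Q2 Zg Zh H p = indicator ({0<..} \<times> {0<..}) p *\<^sub>R
     ((\<i> * Zg) * (\<i> * Zh) * H (\<i> * Zg * of_real (fst p)) (\<i> * Zh * of_real (snd p)))"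

lemma ray2_ok_Q: "ray2_ok Zg Zh H \<longleftrightarrow> integrable (lborel \<Otimes>\<^sub>M lborel) (Q2 Zg Zh H)"
proof -
  have "(\<lambda>x. indicator ({0<..} \<times> {0<..}) x *\<^sub>R
     (\<lambda>(u::real, v::real). (\<i> * Zg) * (\<i> * Zh) * H (\<i> * Zg * of_real u) (\<i> * Zh * of_real v)) x) = Q2 Zg Zh H"
    by (auto simp: Q2_def fun_eq_iff)
  then show ?thesis unfolding ray2_ok_def set_integrable_def by simp
qed

lemma ray2_norm_Q: "ray2_norm Zg Zh H = lebesgue_integral (lborel \<Otimes>\<^sub>M lborel) (\<lambda>p. norm (Q2 Zg Zh H p))"
  unfolding ray2_norm_def set_lebesgue_integral_def Q2_def
  by (rule arg_cong[where f="lebesgue_integral (lborel \<Otimes>\<^sub>M lborel)"]) (auto simp: indicator_def fun_eq_iff)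

lemma Q2_inner: "lebesgue_integral lborel (\<lambda>v. Q2 Zg Zh H (u, v)) = Iray Zg (\<lambda>t. rayint Zh (H t)) u"
proof (cases "u > 0")
  case True
  have "(\<lambda>v. Q2 Zg Zh H (u, v)) = (\<lambda>v. (\<i> * Zg) * Iray Zh (H (\<i> * Zg * of_real u)) v)"
    using True by (auto simp: Q2_def Iray_def fun_eq_iff indicator_def)
  then have "lebesgue_integral lborel (\<lambda>v. Q2 Zg Zh H (u, v)) = (\<i> * Zg) * lebesgue_integral lborel (Iray Zh (H (\<i> * Zg * of_real u)))"
    by (simp only: integral_mult_right_zero)
  also have "\<dots> = Iray Zg (\<lambda>t. rayint Zh (H t)) u"
    using True by (simp add: Iray_def rayint_I)
  finally show ?thesis .
next
  case False
  then show ?thesis by (simp add: Q2_def Iray_def indicator_def)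
qed

lemma Q2_iter: "rayint Zg (\<lambda>t. rayint Zh (H t)) = lebesgue_integral lborel (\<lambda>u. lebesgue_integral lborel (\<lambda>v. Q2 Zg Zh H (u, v)))"
  unfolding Q2_inner rayint_I ..

lemma Q2_bounds:
  assumes "ray2_ok Zg Zh H"
  shows "integrable lborel (\<lambda>u. lebesgue_integral lborel (\<lambda>v. Q2 Zg Zh H (u, v)))"
    "lebesgue_integral lborel (\<lambda>u. norm (lebesgue_integral lborel (\<lambda>v. Q2 Zg Zh H (u, v)))) \<le> ray2_norm Zg Zh H"
    "norm (rayint Zg (\<lambda>t. rayint Zh (H t))) \<le> ray2_norm Zg Zh H"
proof -
  have I: "integrable (lborel \<Otimes>\<^sub>M lborel) (Q2 Zg Zh H)" using assms ray2_ok_Q by blast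
  show I1: "integrable lborel (\<lambda>u. lebesgue_integral lborel (\<lambda>v. Q2 Zg Zh H (u, v)))"
    by (rule lborel_pair.integrable_fst'[OF I])
  have In: "integrable (lborel \<Otimes>\<^sub>M lborel) (\<lambda>p. norm (Q2 Zg Zh H p))" using I by (rule integrable_norm)
  have "lebesgue_integral lborel (\<lambda>u. norm (lebesgue_integral lborel (\<lambda>v. Q2 Zg Zh H (u, v))))
      \<le> lebesgue_integral lborel (\<lambda>u. lebesgue_integral lborel (\<lambda>v. norm (Q2 Zg Zh H (u, v))))"
    by (intro Bochner_Integration.integral_mono integrable_norm I1 lborel_pair.integrable_fst'[OF In, simplified]
        integral_norm_bound)
  also have "\<dots> = ray2_norm Zg Zh H"
    unfolding ray2_norm_Q using lborel_pair.integral_fst'[OF In] by simp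
  finally show I2: "lebesgue_integral lborel (\<lambda>u. norm (lebesgue_integral lborel (\<lambda>v. Q2 Zg Zh H (u, v)))) \<le> ray2_norm Zg Zh H" .
  show "norm (rayint Zg (\<lambda>t. rayint Zh (H t))) \<le> ray2_norm Zg Zh H"
    unfolding Q2_iter using integral_norm_bound I2 by (rule order_trans)
qed

lemma Q2_swap: "Q2 Zh Zg (\<lambda>a b. H b a) (v, u) = Q2 Zg Zh H (u, v)"
  by (auto simp: Q2_def indicator_def algebra_simps)

lemma ray2_fubini:
  assumes "ray2_ok Zg Zh H"
  shows "rayint Zg (\<lambda>t. rayint Zh (\<lambda>t'. H t t')) = rayint Zh (\<lambda>t'. rayint Zg (\<lambda>t. H t t'))"
proof -
  have I: "integrable (lborel \<Otimes>\<^sub>M lborel) (\<lambda>(u, v). Q2 Zg Zh H (u, v))"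
    using assms ray2_ok_Q by (simp add: case_prod_eta)
  have e1: "rayint Zh (\<lambda>t'. rayint Zg (\<lambda>t. H t t')) = lebesgue_integral lborel (\<lambda>v. lebesgue_integral lborel (\<lambda>u. Q2 Zh Zg (\<lambda>a b. H b a) (v, u)))"
    using Q2_iter[of Zh Zg "\<lambda>a b. H b a"] by simp
  have e2: "rayint Zg (\<lambda>t. rayint Zh (\<lambda>t'. H t t')) = lebesgue_integral lborel (\<lambda>u. lebesgue_integral lborel (\<lambda>v. Q2 Zg Zh H (u, v)))"
    using Q2_iter[of Zg Zh H] by simp
  have "lebesgue_integral lborel (\<lambda>v. lebesgue_integral lborel (\<lambda>u. Q2 Zg Zh H (u, v))) = lebesgue_integral lborel (\<lambda>u. lebesgue_integral lborel (\<lambda>v. Q2 Zg Zh H (u, v)))"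
    using lborel_pair.Fubini_integral[where f="\<lambda>u v. Q2 Zg Zh H (u, v)"] I by blast
  then have "rayint Zg (\<lambda>t. rayint Zh (\<lambda>t'. H t t')) = rayint Zh (\<lambda>t'. rayint Zg (\<lambda>t. H t t'))"
    unfolding e1 e2 Q2_swap[of Zh Zg H] by simp
  then show ?thesis by simp
qed

lemma infsum_count:
  fixes f :: "'a \<Rightarrow> complex"
  shows "infsum f A = lebesgue_integral (count_space A) f"
proof (cases "integrable (count_space A) f")
  case True
  then have "Infinite_Set_Sum.abs_summable_on f A" by (simp add: abs_summable_on_def)
  from infsetsum_infsum[OF this] show ?thesis unfolding infsetsum_def by simp
next
  case False
  then have "\<not> Infinite_Set_Sum.abs_summable_on f A" by (simp add: abs_summable_on_def)
  then have "\<not> Infinite_Sum.abs_summable_on f A"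
    using abs_summable_equivalent by blast
  then have "\<not> f summable_on A" using summable_on_iff_abs_summable_on_complex by blast
  then show ?thesis using False by (simp add: infsum_not_exists not_integrable_integral_eq)
qed

lemma sum_int_swap:
  fixes f :: "'a \<Rightarrow> real \<Rightarrow> complex"
  assumes A: "countable A" and fi: "\<And>h. h \<in> A \<Longrightarrow> integrable lborel (f h)"
    and s: "(\<lambda>h. lebesgue_integral lborel (\<lambda>u. norm (f h u))) summable_on A"
  shows "infsum (\<lambda>h. lebesgue_integral lborel (f h)) A = lebesgue_integral lborel (\<lambda>u. infsum (\<lambda>h. f h u) A)"
proof -
  interpret P: pair_sigma_finite "count_space A" lborel
    by (intro pair_sigma_finite.intro sigma_finite_measure_count_space_countable A sigma_finite_lborel)
  have meas: "(\<lambda>(h, u). f h u) \<in> borel_measurable (count_space A \<Otimes>\<^sub>M lborel)"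
    by (rule measurable_pair_measure_countable1[OF A]) (use fi in simp)
  have i1: "integrable (count_space A) (\<lambda>h. lebesgue_integral lborel (\<lambda>u. norm (f h u)))"
  proof -
    have "(\<lambda>h. norm (lebesgue_integral lborel (\<lambda>u. norm (f h u)))) = (\<lambda>h. lebesgue_integral lborel (\<lambda>u. norm (f h u)))"
      by (rule ext) (simp add: abs_of_nonneg Bochner_Integration.integral_nonneg)
    then have "Infinite_Sum.abs_summable_on (\<lambda>h. lebesgue_integral lborel (\<lambda>u. norm (f h u))) A"
      using s by (simp only:)
    then have "Infinite_Set_Sum.abs_summable_on (\<lambda>h. lebesgue_integral lborel (\<lambda>u. norm (f h u))) A"
      using abs_summable_equivalent by blast
    then show ?thesis by (simp add: abs_summable_on_def)
  qed
  have "integrable (count_space A \<Otimes>\<^sub>M lborel) (\<lambda>(h, u). f h u)"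
  proof (rule P.Fubini_integrable[OF meas])
    show "integrable (count_space A) (\<lambda>x. LINT y|lborel. norm (case (x, y) of (h, u) \<Rightarrow> f h u))"
      using i1 by simp
    show "AE x in count_space A. integrable lborel (\<lambda>y. case (x, y) of (h, u) \<Rightarrow> f h u)"
      unfolding AE_count_space using fi by simp
  qed
  then have "lebesgue_integral lborel (\<lambda>u. lebesgue_integral (count_space A) (\<lambda>h. f h u)) =
      lebesgue_integral (count_space A) (\<lambda>h. lebesgue_integral lborel (\<lambda>u. f h u))"
    by (rule P.Fubini_integral)
  then show ?thesis by (simp add: infsum_count)
qed


lemma countable_Gstar: "countable (Gstar :: (int^'m::finite) set)"
proof -
  have "(UNIV :: (int^'m) set) = vec_lambda ` UNIV"
    by (metis UNIV_I image_eqI subsetI subset_antisym vec_lambda_eta)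
  then have "countable (UNIV :: (int^'m) set)" by (metis countable_image countableI_type)
  then show ?thesis by (rule countable_subset[rotated]) simp
qed

definition H2 :: "(int^'m::finite \<Rightarrow> complex \<Rightarrow> complex) \<Rightarrow> (int^'m \<Rightarrow> complex \<Rightarrow> complex) \<Rightarrow> int^'m \<Rightarrow> int^'m \<Rightarrow> complex \<Rightarrow> complex \<Rightarrow> complex" where
  "H2 F G g h = (\<lambda>t t'. (1 / t^2) * (1 / t'^2) * (t * t' / (t' - t)) * F g t * G h t')"

definition TT :: "('m::finite \<Rightarrow> 'm \<Rightarrow> int) \<Rightarrow> (int^'m \<Rightarrow> rat) \<Rightarrow> complex^'m
    \<Rightarrow> (int^'m \<Rightarrow> complex \<Rightarrow> complex) \<Rightarrow> (int^'m \<Rightarrow> complex \<Rightarrow> complex) \<Rightarrow> int^'m \<Rightarrow> int^'m \<Rightarrow> complex" where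
  "TT \<omega> \<Omega> z F G g h = of_rat (\<Omega> g) * of_rat (\<Omega> h) *
        rayint (Zc z g) (\<lambda>t. rayint (Zc z h) (\<lambda>t'.
           (1 / t^2) * (1 / t'^2) * of_int (pairing \<omega> g h) * (t * t' / (t' - t)) * F g t * G h t'))"

lemma Dfun_TT: "Dfun \<omega> \<Omega> z F G = infsum (\<lambda>(g, h). TT \<omega> \<Omega> z F G g h) (Gstar \<times> Gstar)"
  unfolding Dfun_def TT_def ..

lemma TT_alt: "TT \<omega> \<Omega> z F G g h = of_rat (\<Omega> g) * of_rat (\<Omega> h) * of_int (pairing \<omega> g h) *
    rayint (Zc z g) (\<lambda>t. rayint (Zc z h) (H2 F G g h t))"
proof -
  have "(\<lambda>t. rayint (Zc z h) (\<lambda>t'.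
           (1 / t^2) * (1 / t'^2) * of_int (pairing \<omega> g h) * (t * t' / (t' - t)) * F g t * G h t'))
      = (\<lambda>t. of_int (pairing \<omega> g h) * rayint (Zc z h) (H2 F G g h t))"
  proof
    fix t
    have "(\<lambda>t'. (1 / t^2) * (1 / t'^2) * of_int (pairing \<omega> g h) * (t * t' / (t' - t)) * F g t * G h t')
        = (\<lambda>t'. of_int (pairing \<omega> g h) * H2 F G g h t t')"
      by (auto simp: H2_def fun_eq_iff)
    then show "rayint (Zc z h) (\<lambda>t'. (1 / t^2) * (1 / t'^2) * of_int (pairing \<omega> g h) * (t * t' / (t' - t)) * F g t * G h t')
        = of_int (pairing \<omega> g h) * rayint (Zc z h) (H2 F G g h t)"
      by (simp only: rayint_cmult)
  qed
  then show ?thesis unfolding TT_def by (simp only: rayint_cmult mult.assoc)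
qed

lemma abs_double_H2: "abs_double \<omega> \<Omega> z F G \<longleftrightarrow>
     (\<forall>g\<in>Gstar. \<forall>h\<in>Gstar. \<Omega> g \<noteq> 0 \<and> \<Omega> h \<noteq> 0 \<and> pairing \<omega> g h \<noteq> 0 \<longrightarrow>
        ray2_ok (Zc z g) (Zc z h) (H2 F G g h)) \<and>
     (\<lambda>(g, h). of_rat \<bar>\<Omega> g\<bar> * of_rat \<bar>\<Omega> h\<bar> * of_int \<bar>pairing \<omega> g h\<bar> *
        ray2_norm (Zc z g) (Zc z h) (H2 F G g h)) summable_on (Gstar \<times> Gstar)"
  unfolding abs_double_def H2_def ..

lemma ray2_norm_nonneg: "ray2_norm Zg Zh H \<ge> 0"
  unfolding ray2_norm_Q by (rule Bochner_Integration.integral_nonneg) simp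

lemma TT_bound:
  fixes z :: "complex^'m::finite"
  assumes "abs_double \<omega> \<Omega> z F G" "g \<in> Gstar" "h \<in> Gstar"
  shows "norm (TT \<omega> \<Omega> z F G g h) \<le> of_rat \<bar>\<Omega> g\<bar> * of_rat \<bar>\<Omega> h\<bar> * of_int \<bar>pairing \<omega> g h\<bar> *
        ray2_norm (Zc z g) (Zc z h) (H2 F G g h)"
proof (cases "\<Omega> g \<noteq> 0 \<and> \<Omega> h \<noteq> 0 \<and> pairing \<omega> g h \<noteq> 0")
  case True
  then have ok: "ray2_ok (Zc z g) (Zc z h) (H2 F G g h)" using assms unfolding abs_double_H2 by blast
  have "norm (TT \<omega> \<Omega> z F G g h) = of_rat \<bar>\<Omega> g\<bar> * of_rat \<bar>\<Omega> h\<bar> * of_int \<bar>pairing \<omega> g h\<bar> *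
        norm (rayint (Zc z g) (\<lambda>t. rayint (Zc z h) (H2 F G g h t)))"
    unfolding TT_alt by (simp add: norm_mult norm_of_rat_c)
  also have "\<dots> \<le> of_rat \<bar>\<Omega> g\<bar> * of_rat \<bar>\<Omega> h\<bar> * of_int \<bar>pairing \<omega> g h\<bar> * ray2_norm (Zc z g) (Zc z h) (H2 F G g h)"
    by (intro mult_left_mono Q2_bounds(3)[OF ok]) simp
  finally show ?thesis .
next
  case False
  then have "TT \<omega> \<Omega> z F G g h = 0" unfolding TT_alt by auto
  then show ?thesis using ray2_norm_nonneg by simp
qed

lemma TT_summable:
  fixes z :: "complex^'m::finite"
  assumes "abs_double \<omega> \<Omega> z F G"
  shows "(\<lambda>(g, h). TT \<omega> \<Omega> z F G g h) summable_on (Gstar \<times> Gstar)"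
proof -
  have s: "(\<lambda>(g, h). of_rat \<bar>\<Omega> g\<bar> * of_rat \<bar>\<Omega> h\<bar> * of_int \<bar>pairing \<omega> g h\<bar> *
        ray2_norm (Zc z g) (Zc z h) (H2 F G g h)) summable_on (Gstar \<times> Gstar)"
    using assms unfolding abs_double_H2 by blast
  have "Infinite_Sum.abs_summable_on (\<lambda>(g, h). TT \<omega> \<Omega> z F G g h) (Gstar \<times> Gstar)"
  proof (rule Infinite_Sum.abs_summable_on_comparison_test'[OF s])
    fix x :: "(int^'m) \<times> (int^'m)" assume "x \<in> Gstar \<times> Gstar"
    then show "norm (case x of (g, h) \<Rightarrow> TT \<omega> \<Omega> z F G g h) \<le> (case x of (g, h) \<Rightarrow> of_rat \<bar>\<Omega> g\<bar> * of_rat \<bar>\<Omega> h\<bar> * of_int \<bar>pairing \<omega> g h\<bar> *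
        ray2_norm (Zc z g) (Zc z h) (H2 F G g h))"
      using TT_bound[OF assms] by (cases x) auto
  qed
  then show ?thesis by (rule abs_summable_summable)
qed

lemma pairing_skew:
  assumes "\<forall>a b. \<omega> a b = - \<omega> b a"
  shows "pairing \<omega> h g = - pairing \<omega> g h"
proof -
  have "pairing \<omega> h g = (\<Sum>a\<in>UNIV. \<Sum>b\<in>UNIV. h$a * g$b * \<omega> a b)" unfolding pairing_def ..
  also have "\<dots> = (\<Sum>b\<in>UNIV. \<Sum>a\<in>UNIV. h$a * g$b * \<omega> a b)" by (rule sum.swap)
  also have "\<dots> = (\<Sum>b\<in>UNIV. \<Sum>a\<in>UNIV. - (g$b * h$a * \<omega> b a))"
  proof (intro sum.cong refl)
    fix a b
    have "\<omega> b a = - \<omega> a b" using assms by blast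
    then show "h$a * g$b * \<omega> a b = - (g$b * h$a * \<omega> b a)" by simp
  qed
  also have "\<dots> = - pairing \<omega> g h" unfolding pairing_def by (simp add: sum_negf)
  finally show ?thesis .
qed

lemma H2_swap: "H2 X Y g h s' s = - H2 Y X h g s s'"
proof (cases "s = s'")
  case True then show ?thesis by (simp add: H2_def)
next
  case False
  then have "s' - s \<noteq> 0" "s - s' \<noteq> 0" by auto
  then have "s' * s / (s - s') = - (s * s' / (s' - s))"
    by (simp add: field_simps)
  then show ?thesis unfolding H2_def by (simp add: algebra_simps)
qed

lemma TT_swap:
  fixes z :: "complex^'m::finite"
  assumes skew: "\<forall>a b. \<omega> a b = - \<omega> b a" and ad: "abs_double \<omega> \<Omega> z Y X"
    and g: "g \<in> Gstar" and h: "h \<in> Gstar"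
  shows "TT \<omega> \<Omega> z Y X h g = TT \<omega> \<Omega> z X Y g h"
proof (cases "\<Omega> g \<noteq> 0 \<and> \<Omega> h \<noteq> 0 \<and> pairing \<omega> g h \<noteq> 0")
  case True
  have phg: "pairing \<omega> h g = - pairing \<omega> g h" by (rule pairing_skew[OF skew])
  then have "pairing \<omega> h g \<noteq> 0" using True by simp
  then have ok: "ray2_ok (Zc z h) (Zc z g) (H2 Y X h g)" using ad True g h unfolding abs_double_H2 by blast
  have "rayint (Zc z h) (\<lambda>t. rayint (Zc z g) (H2 Y X h g t)) = rayint (Zc z g) (\<lambda>t'. rayint (Zc z h) (\<lambda>t. H2 Y X h g t t'))"
    using ray2_fubini[OF ok] by simp
  also have "\<dots> = rayint (Zc z g) (\<lambda>t'. rayint (Zc z h) (\<lambda>t. (-1) * H2 X Y g h t' t))"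
    by (simp add: H2_swap[of X Y g h])
  also have "\<dots> = - rayint (Zc z g) (\<lambda>t'. rayint (Zc z h) (H2 X Y g h t'))"
    by (simp only: rayint_cmult) simp
  finally show ?thesis unfolding TT_alt phg by simp
next
  case False
  then have "pairing \<omega> h g = 0 \<or> \<Omega> g = 0 \<or> \<Omega> h = 0" using pairing_skew[OF skew, of h g] by auto
  then show ?thesis using False unfolding TT_alt by auto
qed

lemma Dfun_swap:
  fixes z :: "complex^'m::finite"
  assumes skew: "\<forall>a b. \<omega> a b = - \<omega> b a" and ad: "abs_double \<omega> \<Omega> z Y X"
  shows "Dfun \<omega> \<Omega> z Y X = Dfun \<omega> \<Omega> z X Y"
proof -
  have b: "bij_betw prod.swap (Gstar \<times> Gstar) (Gstar \<times> Gstar)"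
    by (simp add: bij_betw_def inj_on_def image_def) blast
  have "Dfun \<omega> \<Omega> z Y X = (\<Sum>\<^sub>\<infinity>x\<in>Gstar \<times> Gstar. (\<lambda>(g, h). TT \<omega> \<Omega> z Y X g h) (prod.swap x))"
    unfolding Dfun_TT by (rule infsum_reindex_bij_betw[OF b, symmetric])
  also have "\<dots> = Dfun \<omega> \<Omega> z X Y"
    unfolding Dfun_TT
    by (rule infsum_cong) (auto simp: TT_swap[OF skew ad])
  finally show ?thesis .
qed


lemma H2_fact: "H2 X Y g h t t' = X g t / t^2 * ((1 / t') * (t / (t' - t)) * Y h t')"
proof (cases "t = 0 \<or> t' = 0 \<or> t' = t")
  case True then show ?thesis by (auto simp: H2_def)
next
  case False
  then have "t \<noteq> 0" "t' \<noteq> 0" "t' - t \<noteq> 0" by auto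
  then show ?thesis unfolding H2_def by (simp add: field_simps power2_eq_square)
qed

lemma Dfun_slice:
  fixes z :: "complex^'m::finite"
  assumes ad: "abs_double \<omega> \<Omega> z X Y" and g: "g \<in> Gstar"
  shows "infsum (TT \<omega> \<Omega> z X Y g) Gstar = of_rat (\<Omega> g) * rayint (Zc z g) (\<lambda>t. X g t / t^2 *
     GS z (\<lambda>h. of_rat (\<Omega> h) * of_int (pairing \<omega> g h)) (\<lambda>h t'. (1 / t') * (t / (t' - t)) * Y h t'))"
proof (cases "\<Omega> g = 0")
  case True
  then show ?thesis unfolding TT_alt by simp
next
  case Og: False
  define c where "c h = (of_rat (\<Omega> h) * of_int (pairing \<omega> g h) :: complex)" for h
  define f where "f h u = c h * lebesgue_integral lborel (\<lambda>v. Q2 (Zc z g) (Zc z h) (H2 X Y g h) (u, v))" for h u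
  have TTf: "TT \<omega> \<Omega> z X Y g h = of_rat (\<Omega> g) * lebesgue_integral lborel (f h)" for h
  proof -
    have "TT \<omega> \<Omega> z X Y g h = of_rat (\<Omega> g) * (c h * rayint (Zc z g) (\<lambda>t. rayint (Zc z h) (H2 X Y g h t)))"
      unfolding TT_alt c_def by (simp add: mult.assoc)
    also have "\<dots> = of_rat (\<Omega> g) * lebesgue_integral lborel (f h)"
      unfolding Q2_iter f_def by (simp only: integral_mult_right_zero)
    finally show ?thesis .
  qed
  have nc: "norm (c h) = of_rat \<bar>\<Omega> h\<bar> * of_int \<bar>pairing \<omega> g h\<bar>" for h
    unfolding c_def by (simp add: norm_mult norm_of_rat_c)
  have ok: "ray2_ok (Zc z g) (Zc z h) (H2 X Y g h)" if "h \<in> Gstar" "c h \<noteq> 0" for h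
    using ad that g Og unfolding abs_double_H2 c_def by auto
  have fi: "integrable lborel (f h)" if "h \<in> Gstar" for h
  proof (cases "c h = 0")
    case True then show ?thesis unfolding f_def by simp
  next
    case False
    then show ?thesis unfolding f_def using Q2_bounds(1)[OF ok[OF that False]] by (intro integrable_mult_right)
  qed
  have sB: "(\<lambda>h. of_rat \<bar>\<Omega> g\<bar> * of_rat \<bar>\<Omega> h\<bar> * of_int \<bar>pairing \<omega> g h\<bar> *
        ray2_norm (Zc z g) (Zc z h) (H2 X Y g h)) summable_on Gstar"
    using summable_on_SigmaD1[where f="\<lambda>g h. of_rat \<bar>\<Omega> g\<bar> * of_rat \<bar>\<Omega> h\<bar> * of_int \<bar>pairing \<omega> g h\<bar> *
        ray2_norm (Zc z g) (Zc z h) (H2 X Y g h)" and A=Gstar and B="\<lambda>_. Gstar", OF _ g] ad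
    unfolding abs_double_H2 by blast
  have sB2: "(\<lambda>h. norm (c h) * ray2_norm (Zc z g) (Zc z h) (H2 X Y g h)) summable_on Gstar"
  proof -
    have "(\<lambda>h. (1 / of_rat \<bar>\<Omega> g\<bar>) * (of_rat \<bar>\<Omega> g\<bar> * of_rat \<bar>\<Omega> h\<bar> * of_int \<bar>pairing \<omega> g h\<bar> *
        ray2_norm (Zc z g) (Zc z h) (H2 X Y g h))) summable_on Gstar"
      using sB by (rule summable_on_cmult_right)
    moreover have "of_rat \<bar>\<Omega> g\<bar> \<noteq> (0::real)" using Og by simp
    ultimately show ?thesis unfolding nc by (simp add: mult.assoc)
  qed
  have s: "(\<lambda>h. lebesgue_integral lborel (\<lambda>u. norm (f h u))) summable_on Gstar"
  proof (rule summable_on_comparison_test[OF sB2])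
    fix h :: "int^'m" assume h: "h \<in> Gstar"
    show "0 \<le> lebesgue_integral lborel (\<lambda>u. norm (f h u))"
      by (rule Bochner_Integration.integral_nonneg) simp
    show "lebesgue_integral lborel (\<lambda>u. norm (f h u)) \<le> norm (c h) * ray2_norm (Zc z g) (Zc z h) (H2 X Y g h)"
    proof (cases "c h = 0")
      case True then show ?thesis unfolding f_def by (simp add: ray2_norm_nonneg)
    next
      case False
      have "lebesgue_integral lborel (\<lambda>u. norm (f h u)) = norm (c h) *
          lebesgue_integral lborel (\<lambda>u. norm (lebesgue_integral lborel (\<lambda>v. Q2 (Zc z g) (Zc z h) (H2 X Y g h) (u, v))))"
        unfolding f_def norm_mult by (rule integral_mult_right_zero)
      also have "\<dots> \<le> norm (c h) * ray2_norm (Zc z g) (Zc z h) (H2 X Y g h)"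
        by (intro mult_left_mono Q2_bounds(2)[OF ok[OF h False]]) simp
      finally show ?thesis .
    qed
  qed
  have "infsum (TT \<omega> \<Omega> z X Y g) Gstar = of_rat (\<Omega> g) * infsum (\<lambda>h. lebesgue_integral lborel (f h)) Gstar"
    unfolding TTf by (rule infsum_cmult_right')
  also have "infsum (\<lambda>h. lebesgue_integral lborel (f h)) Gstar = lebesgue_integral lborel (\<lambda>u. infsum (\<lambda>h. f h u) Gstar)"
    by (rule sum_int_swap[OF countable_Gstar fi s])
  also have "(\<lambda>u. infsum (\<lambda>h. f h u) Gstar) = Iray (Zc z g) (\<lambda>t. X g t / t^2 *
     GS z (\<lambda>h. of_rat (\<Omega> h) * of_int (pairing \<omega> g h)) (\<lambda>h t'. (1 / t') * (t / (t' - t)) * Y h t'))"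
  proof
    fix u :: real
    have fu: "f h u = c h * Iray (Zc z g) (\<lambda>t. rayint (Zc z h) (H2 X Y g h t)) u" for h
      unfolding f_def Q2_inner ..
    show "infsum (\<lambda>h. f h u) Gstar = Iray (Zc z g) (\<lambda>t. X g t / t^2 *
     GS z (\<lambda>h. of_rat (\<Omega> h) * of_int (pairing \<omega> g h)) (\<lambda>h t'. (1 / t') * (t / (t' - t)) * Y h t')) u"
    proof (cases "u > 0")
      case False
      then show ?thesis unfolding fu by (simp add: Iray_def)
    next
      case True
      define t where "t = \<i> * Zc z g * of_real u"
      have r: "rayint (Zc z h) (H2 X Y g h t) = X g t / t^2 * rayint (Zc z h) (\<lambda>t'. (1 / t') * (t / (t' - t)) * Y h t')" for h
      proof -
        have "H2 X Y g h t = (\<lambda>t'. X g t / t^2 * ((1 / t') * (t / (t' - t)) * Y h t'))"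
          by (rule ext) (rule H2_fact)
        then show ?thesis by (simp only: rayint_cmult)
      qed
      have "infsum (\<lambda>h. f h u) Gstar = (\<Sum>\<^sub>\<infinity>h\<in>Gstar. (\<i> * Zc z g * (X g t / t^2)) * (c h * rayint (Zc z h) (\<lambda>t'. (1 / t') * (t / (t' - t)) * Y h t')))"
      proof (rule infsum_cong)
        fix h :: "int^'m"
        have "f h u = c h * (\<i> * Zc z g * rayint (Zc z h) (H2 X Y g h t))"
          using True unfolding fu Iray_def t_def by simp
        then show "f h u = (\<i> * Zc z g * (X g t / t^2)) * (c h * rayint (Zc z h) (\<lambda>t'. (1 / t') * (t / (t' - t)) * Y h t'))"
          unfolding r by (simp only: mult.assoc mult.commute mult.left_commute)
      qed
      also have "\<dots> = (\<i> * Zc z g * (X g t / t^2)) * GS z c (\<lambda>h t'. (1 / t') * (t / (t' - t)) * Y h t')"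
        unfolding GS_def by (rule infsum_cmult_right')
      finally show ?thesis using True unfolding c_def[abs_def] Iray_def t_def[symmetric] by (simp add: mult.assoc)
    qed
  qed
  finally show ?thesis unfolding rayint_I by simp
qed

lemma Dfun_iter:
  fixes z :: "complex^'m::finite"
  assumes ad: "abs_double \<omega> \<Omega> z X Y"
  shows "Dfun \<omega> \<Omega> z X Y = (\<Sum>\<^sub>\<infinity>g\<in>Gstar. of_rat (\<Omega> g) * rayint (Zc z g) (\<lambda>t. X g t / t^2 *
     GS z (\<lambda>h. of_rat (\<Omega> h) * of_int (pairing \<omega> g h)) (\<lambda>h t'. (1 / t') * (t / (t' - t)) * Y h t')))"
proof -
  have "Dfun \<omega> \<Omega> z X Y = (\<Sum>\<^sub>\<infinity>g\<in>Gstar. infsum (TT \<omega> \<Omega> z X Y g) Gstar)"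
    unfolding Dfun_TT using infsum_Sigma'_banach[OF TT_summable[OF ad]] by simp
  also have "\<dots> = (\<Sum>\<^sub>\<infinity>g\<in>Gstar. of_rat (\<Omega> g) * rayint (Zc z g) (\<lambda>t. X g t / t^2 *
     GS z (\<lambda>h. of_rat (\<Omega> h) * of_int (pairing \<omega> g h)) (\<lambda>h t'. (1 / t') * (t / (t' - t)) * Y h t')))"
    by (rule infsum_cong) (rule Dfun_slice[OF ad])
  finally show ?thesis .
qed


lemma aux_div: "(Y::complex) = X * (k + L) \<Longrightarrow> X / s * L = Y / s + (-1) * (k * X / s)"
  by (simp add: distrib_left add_divide_distrib mult.commute)

lemma core:
  fixes z :: "complex^'m::finite"
  assumes skew: "\<forall>a b. \<omega> a b = - \<omega> b a"
    and hY: "\<And>g u. g \<in> Gstar \<Longrightarrow> \<Omega> g \<noteq> 0 \<Longrightarrow> u > 0 \<Longrightarrow>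
       Y g (\<i> * Zc z g * of_real u) = X g (\<i> * Zc z g * of_real u) *
         (\<kappa> g (\<i> * Zc z g * of_real u) + LinOp \<omega> \<Omega> z Y g (\<i> * Zc z g * of_real u))"
    and adXY: "abs_double \<omega> \<Omega> z X Y" and adYX: "abs_double \<omega> \<Omega> z Y X"
    and gY: "genok z (\<lambda>g. of_rat (\<Omega> g)) (\<lambda>g t. Y g t / t^2)"
    and gK: "genok z (\<lambda>g. of_rat (\<Omega> g)) (\<lambda>g t. \<kappa> g t * X g t / t^2)"
  shows "(1 / (2 * pi * \<i>)) * Sfun \<Omega> z (\<lambda>g t. Y g t / t^2)
      - (1 / (2 * (2 * pi * \<i>)^2)) * (Dfun \<omega> \<Omega> z Y X + Dfun \<omega> \<Omega> z X Y)
      = (1 / (2 * pi * \<i>)) * Sfun \<Omega> z (\<lambda>g t. \<kappa> g t * X g t / t^2)"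
proof -
  define c where "c = 2 * pi * \<i>"
  have c0: "c \<noteq> 0" unfolding c_def by simp
  have GL: "GS z (\<lambda>h. of_rat (\<Omega> h) * of_int (pairing \<omega> g h)) (\<lambda>h t'. (1 / t') * (t / (t' - t)) * Y h t')
      = c * LinOp \<omega> \<Omega> z Y g t" for g t
    unfolding LinOp_GS c_def[symmetric] using c0 by simp
  have "Dfun \<omega> \<Omega> z X Y = (\<Sum>\<^sub>\<infinity>g\<in>Gstar. of_rat (\<Omega> g) * rayint (Zc z g) (\<lambda>t. X g t / t^2 * (c * LinOp \<omega> \<Omega> z Y g t)))"
    unfolding Dfun_iter[OF adXY] GL ..
  also have "\<dots> = GS z (\<lambda>g. of_rat (\<Omega> g)) (\<lambda>g t. c * (X g t / t^2 * LinOp \<omega> \<Omega> z Y g t))"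
    unfolding GS_def by (simp only: mult.left_commute[of c])
  also have "\<dots> = c * GS z (\<lambda>g. of_rat (\<Omega> g)) (\<lambda>g t. X g t / t^2 * LinOp \<omega> \<Omega> z Y g t)"
    by (rule GS_cmult_eq)
  also have "GS z (\<lambda>g. of_rat (\<Omega> g)) (\<lambda>g t. X g t / t^2 * LinOp \<omega> \<Omega> z Y g t)
     = GS z (\<lambda>g. of_rat (\<Omega> g)) (\<lambda>g t. Y g t / t^2 + (-1) * (\<kappa> g t * X g t / t^2))"
  proof (rule GS_cong)
    fix h :: "int^'m" and u :: real
    assume a: "h \<in> Gstar" "of_rat (\<Omega> h) \<noteq> (0::complex)" "u > 0"
    then have "\<Omega> h \<noteq> 0" by simp
    from hY[OF a(1) this a(3)] show "X h (\<i> * Zc z h * of_real u) / (\<i> * Zc z h * of_real u)^2 * LinOp \<omega> \<Omega> z Y h (\<i> * Zc z h * of_real u) =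
      Y h (\<i> * Zc z h * of_real u) / (\<i> * Zc z h * of_real u)^2 + (-1) * (\<kappa> h (\<i> * Zc z h * of_real u) * X h (\<i> * Zc z h * of_real u) / (\<i> * Zc z h * of_real u)^2)"
      by (rule aux_div)
  qed
  also have "\<dots> = Sfun \<Omega> z (\<lambda>g t. Y g t / t^2) - Sfun \<Omega> z (\<lambda>g t. \<kappa> g t * X g t / t^2)"
    using GS_add[OF gY GS_cmult[OF gK, of "-1"]] GS_cmult_eq[of z _ "-1"] unfolding Sfun_GS by simp
  finally have DXY: "Dfun \<omega> \<Omega> z X Y = c * (Sfun \<Omega> z (\<lambda>g t. Y g t / t^2) - Sfun \<Omega> z (\<lambda>g t. \<kappa> g t * X g t / t^2))" .
  have DYX: "Dfun \<omega> \<Omega> z Y X = Dfun \<omega> \<Omega> z X Y" by (rule Dfun_swap[OF skew adYX])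
  show ?thesis unfolding DYX DXY c_def[symmetric] using c0
    by (simp add: field_simps power2_eq_square)
qed


lemma gen_wt:
  fixes z :: "complex^'m::finite"
  assumes "abs_single \<Omega> z F"
  shows "genok z (\<lambda>g. of_rat (\<Omega> g) * of_int (g$d)) F"
    "genok z (\<lambda>g. of_rat (\<Omega> g)) (\<lambda>g t. of_int (g$d) * F g t)"
proof -
  show g1: "genok z (\<lambda>g. of_rat (\<Omega> g) * of_int (g$d)) F"
  proof (rule abs_single_genok[OF assms, where C=1])
    fix h :: "int^'m"
    have "of_rat \<bar>\<Omega> h\<bar> * \<bar>of_int (h$d)\<bar> \<le> of_rat \<bar>\<Omega> h\<bar> * cw h"
      by (intro mult_left_mono cw_comp) simp
    then show "norm (of_rat (\<Omega> h) * of_int (h$d) :: complex) \<le> 1 * (cw h * of_rat \<bar>\<Omega> h\<bar>)"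
      by (simp add: norm_mult norm_of_rat_c mult.commute)
  qed
  show "genok z (\<lambda>g. of_rat (\<Omega> g)) (\<lambda>g t. of_int (g$d) * F g t)"
    using GS_inner(1)[OF g1] by simp
qed

lemma pairing_of_int: "(of_int (pairing \<omega> g h) :: complex) =
   (\<Sum>c\<in>UNIV. \<Sum>d\<in>UNIV. of_int (g$c) * of_int (\<omega> c d) * of_int (h$d))"
  unfolding pairing_def by (simp add: mult_ac)

lemma lin_t:
  fixes z :: "complex^'m::finite"
  assumes Znz: "\<forall>h\<in>Gstar. \<Omega> h \<noteq> 0 \<longrightarrow> Zc z h \<noteq> 0"
    and ad: "adm \<omega> \<Omega> z g t"
    and aL: "abs_lin \<omega> \<Omega> z g t (\<lambda>h t'. D h t' / t')"
    and aS: "abs_single \<Omega> z (\<lambda>h t'. D h t' / t'^2)"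
  shows "(1 / t) * LinOp \<omega> \<Omega> z D g t = LinOp \<omega> \<Omega> z (\<lambda>h t'. D h t' / t') g t +
    (1 / (2 * pi * \<i>)) * (\<Sum>c\<in>UNIV. \<Sum>d\<in>UNIV. of_int (g$c) * of_int (\<omega> c d) *
        Sfun \<Omega> z (\<lambda>h t'. of_int (h$d) * D h t' / t'^2))"
proof -
  define w where "w h = (of_rat (\<Omega> h) * of_int (pairing \<omega> g h) :: complex)" for h
  define v where "v d h = (of_rat (\<Omega> h) * of_int (h$d) :: complex)" for d h
  have t0: "t \<noteq> 0" using ad unfolding adm_def by blast
  have gv: "genok z (v d) (\<lambda>h t'. D h t' / t'^2)" for d
    unfolding v_def by (rule gen_wt(1)[OF aS])
  have wsum: "w = (\<lambda>h. \<Sum>c\<in>UNIV. \<Sum>d\<in>UNIV. of_int (g$c) * of_int (\<omega> c d) * v d h)"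
    unfolding w_def v_def pairing_of_int by (auto simp: fun_eq_iff sum_distrib_left mult_ac)
  have inner: "genok z (\<lambda>h. \<Sum>d\<in>UNIV. of_int (g$c) * of_int (\<omega> c d) * v d h) (\<lambda>h t'. D h t' / t'^2) \<and>
      GS z (\<lambda>h. \<Sum>d\<in>UNIV. of_int (g$c) * of_int (\<omega> c d) * v d h) (\<lambda>h t'. D h t' / t'^2) =
      (\<Sum>d\<in>UNIV. of_int (g$c) * of_int (\<omega> c d) * GS z (v d) (\<lambda>h t'. D h t' / t'^2))" for c
    using GS_wsum[of UNIV z "\<lambda>d h. of_int (g$c) * of_int (\<omega> c d) * v d h" "\<lambda>h t'. D h t' / t'^2"]
      GS_wcmult[OF gv] by simp
  have outer: "genok z w (\<lambda>h t'. D h t' / t'^2) \<and> GS z w (\<lambda>h t'. D h t' / t'^2) =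
      (\<Sum>c\<in>UNIV. \<Sum>d\<in>UNIV. of_int (g$c) * of_int (\<omega> c d) * GS z (v d) (\<lambda>h t'. D h t' / t'^2))"
    unfolding wsum using GS_wsum[of UNIV z "\<lambda>c h. \<Sum>d\<in>UNIV. of_int (g$c) * of_int (\<omega> c d) * v d h" "\<lambda>h t'. D h t' / t'^2"]
      inner by simp
  have Sv: "GS z (v d) (\<lambda>h t'. D h t' / t'^2) = Sfun \<Omega> z (\<lambda>h t'. of_int (h$d) * D h t' / t'^2)" for d
  proof -
    have "GS z (v d) (\<lambda>h t'. D h t' / t'^2) = GS z (\<lambda>g. of_rat (\<Omega> g)) (\<lambda>h t'. of_int (h$d) * (D h t' / t'^2))"
      unfolding v_def using GS_inner(2)[OF gen_wt(1)[OF aS]] by simp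
    then show ?thesis unfolding Sfun_GS by simp
  qed
  have gL: "genok z w (\<lambda>h t'. (1 / t') * (t / (t' - t)) * (D h t' / t'))"
    using aL unfolding abs_lin_genok w_def .
  have "(1 / t) * LinOp \<omega> \<Omega> z D g t = (1 / (2 * pi * \<i>)) * GS z w (\<lambda>h t'. (1 / t) * ((1 / t') * (t / (t' - t)) * D h t'))"
    unfolding LinOp_GS GS_cmult_eq w_def by simp
  also have "GS z w (\<lambda>h t'. (1 / t) * ((1 / t') * (t / (t' - t)) * D h t')) =
      GS z w (\<lambda>h t'. (1 / t') * (t / (t' - t)) * (D h t' / t') + D h t' / t'^2)"
  proof (rule GS_cong)
    fix h :: "int^'m" and u :: real
    assume h: "h \<in> Gstar" "w h \<noteq> 0" "u > 0"
    define s where "s = \<i> * Zc z h * of_real u"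
    have "\<Omega> h \<noteq> 0" "pairing \<omega> g h \<noteq> 0" using h(2) unfolding w_def by auto
    then have nt: "\<not> onray (Zc z h) t" "Zc z h \<noteq> 0" using ad Znz h(1) unfolding adm_def by auto
    then have s0: "s \<noteq> 0" and st: "s \<noteq> t"
    proof -
      show "s \<noteq> 0" using \<open>Zc z h \<noteq> 0\<close> h(3) unfolding s_def by simp
      have "onray (Zc z h) s" unfolding onray_def s_def
        using h(3) by (intro exI[of _ "1/u"]) (simp add: field_simps)
      then show "s \<noteq> t" using nt(1) by auto
    qed
    then have "s - t \<noteq> 0" by simp
    then show "(1 / t) * ((1 / s) * (t / (s - t)) * D h s) = (1 / s) * (t / (s - t)) * (D h s / s) + D h s / s^2"
      using s0 t0 by (simp add: field_simps power2_eq_square)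
  qed
  also have "\<dots> = GS z w (\<lambda>h t'. (1 / t') * (t / (t' - t)) * (D h t' / t')) + GS z w (\<lambda>h t'. D h t' / t'^2)"
    using GS_add[OF gL conjunct1[OF outer]] by simp
  also have "GS z w (\<lambda>h t'. (1 / t') * (t / (t' - t)) * (D h t' / t')) = (2 * pi * \<i>) * LinOp \<omega> \<Omega> z (\<lambda>h t'. D h t' / t') g t"
    unfolding LinOp_GS w_def by simp
  finally show ?thesis unfolding conjunct2[OF outer] Sv by (simp add: distrib_left)
qed


lemma onray_pt: "u > 0 \<Longrightarrow> onray Z (\<i> * Z * of_real u)"
  unfolding onray_def by (intro exI[of _ "1/u"]) (simp add: field_simps)

lemma vupd_cont: "continuous_on UNIV (\<lambda>w. vupd z a w)"
  unfolding vupd_def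
proof (intro continuous_on_vec_lambda)
  fix i show "continuous_on UNIV (\<lambda>x. if i = a then x else z $ i)"
    by (cases "i = a") (simp_all add: continuous_on_id continuous_on_const)
qed

lemma vupd_self: "vupd z a (z$a) = z"
  by (simp add: vupd_def vec_eq_iff)

lemma LinOp_comb:
  fixes z :: "complex^'m::finite" and \<beta> :: "'m \<Rightarrow> complex"
  assumes aA: "abs_lin \<omega> \<Omega> z g t A" and aB: "abs_lin \<omega> \<Omega> z g t B"
    and aC: "\<And>c. abs_lin \<omega> \<Omega> z g t (C c)"
  shows "abs_lin \<omega> \<Omega> z g t (\<lambda>h s. A h s + B h s + e * (\<Sum>c\<in>UNIV. \<beta> c * C c h s)) \<and>
    LinOp \<omega> \<Omega> z (\<lambda>h s. A h s + B h s + e * (\<Sum>c\<in>UNIV. \<beta> c * C c h s)) g t =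
    LinOp \<omega> \<Omega> z A g t + LinOp \<omega> \<Omega> z B g t + e * (\<Sum>c\<in>UNIV. \<beta> c * LinOp \<omega> \<Omega> z (C c) g t)"
proof -
  define w where "w h = (of_rat (\<Omega> h) * of_int (pairing \<omega> g h) :: complex)" for h
  define K where "K s = (1 / s) * (t / (s - t))" for s
  have gA: "genok z w (\<lambda>h s. K s * A h s)" using aA unfolding abs_lin_genok w_def K_def .
  have gB: "genok z w (\<lambda>h s. K s * B h s)" using aB unfolding abs_lin_genok w_def K_def .
  have gC: "genok z w (\<lambda>h s. \<beta> c * (K s * C c h s))" for c
    using GS_cmult[OF aC[of c, unfolded abs_lin_genok, folded w_def K_def]] .
  have sC: "genok z w (\<lambda>h s. \<Sum>c\<in>UNIV. \<beta> c * (K s * C c h s)) \<and>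
      GS z w (\<lambda>h s. \<Sum>c\<in>UNIV. \<beta> c * (K s * C c h s)) = (\<Sum>c\<in>UNIV. GS z w (\<lambda>h s. \<beta> c * (K s * C c h s)))"
    by (rule GS_sum) (use gC in auto)
  have eC: "genok z w (\<lambda>h s. e * (\<Sum>c\<in>UNIV. \<beta> c * (K s * C c h s)))" using GS_cmult[OF conjunct1[OF sC]] .
  have AB: "genok z w (\<lambda>h s. K s * A h s + K s * B h s) \<and> GS z w (\<lambda>h s. K s * A h s + K s * B h s) = GS z w (\<lambda>h s. K s * A h s) + GS z w (\<lambda>h s. K s * B h s)"
    by (rule GS_add[OF gA gB])
  have all: "genok z w (\<lambda>h s. (K s * A h s + K s * B h s) + e * (\<Sum>c\<in>UNIV. \<beta> c * (K s * C c h s))) \<and>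
     GS z w (\<lambda>h s. (K s * A h s + K s * B h s) + e * (\<Sum>c\<in>UNIV. \<beta> c * (K s * C c h s))) =
     GS z w (\<lambda>h s. K s * A h s + K s * B h s) + GS z w (\<lambda>h s. e * (\<Sum>c\<in>UNIV. \<beta> c * (K s * C c h s)))"
    by (rule GS_add[OF conjunct1[OF AB] eC])
  have feq: "(\<lambda>h s. K s * (A h s + B h s + e * (\<Sum>c\<in>UNIV. \<beta> c * C c h s))) =
      (\<lambda>h s. (K s * A h s + K s * B h s) + e * (\<Sum>c\<in>UNIV. \<beta> c * (K s * C c h s)))"
    by (auto simp: fun_eq_iff distrib_left sum_distrib_left mult_ac)
  show ?thesis
  proof
    show "abs_lin \<omega> \<Omega> z g t (\<lambda>h s. A h s + B h s + e * (\<Sum>c\<in>UNIV. \<beta> c * C c h s))"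
      unfolding abs_lin_genok w_def[symmetric] K_def[symmetric] feq using all by blast
    have "LinOp \<omega> \<Omega> z (\<lambda>h s. A h s + B h s + e * (\<Sum>c\<in>UNIV. \<beta> c * C c h s)) g t =
      (1 / (2 * pi * \<i>)) * (GS z w (\<lambda>h s. K s * A h s) + GS z w (\<lambda>h s. K s * B h s) +
         e * (\<Sum>c\<in>UNIV. \<beta> c * GS z w (\<lambda>h s. K s * C c h s)))"
      unfolding LinOp_GS w_def[symmetric] K_def[symmetric] feq conjunct2[OF all] conjunct2[OF AB]
        GS_cmult_eq conjunct2[OF sC] ..
    also have "\<dots> = LinOp \<omega> \<Omega> z A g t + LinOp \<omega> \<Omega> z B g t + e * (\<Sum>c\<in>UNIV. \<beta> c * LinOp \<omega> \<Omega> z (C c) g t)"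
      unfolding LinOp_GS w_def[symmetric] K_def[symmetric]
      by (simp add: distrib_left sum_distrib_left mult_ac)
    finally show "LinOp \<omega> \<Omega> z (\<lambda>h s. A h s + B h s + e * (\<Sum>c\<in>UNIV. \<beta> c * C c h s)) g t =
      LinOp \<omega> \<Omega> z A g t + LinOp \<omega> \<Omega> z B g t + e * (\<Sum>c\<in>UNIV. \<beta> c * LinOp \<omega> \<Omega> z (C c) g t)" .
  qed
qed

lemma final_alg:
  fixes x dz dt L1 L2 L2' S1 P Q sumC ga t :: complex
  assumes t0: "t \<noteq> 0"
    and e1: "dz = x * (- 2 * pi * \<i> * ga / t + L1)"
    and e2: "dt = x * (2 * pi * \<i> * ga + L2)"
    and e4: "(1 / t) * L2 = L2' + (1 / (2 * pi * \<i>)) * S1"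
    and e5: "S1 = - P"
    and e6: "sumC = x * (2 * pi * \<i>) * P + x * Q"
  shows "dz + (1 / t) * dt - 1 / (2 * pi)^2 * sumC = x * (L1 + L2' - 1 / (2 * pi)^2 * Q)"
proof -
  have L2: "L2 = t * L2' + t * (1 / (2 * pi * \<i>)) * S1" using e4 t0 by (simp add: field_simps)
  have pi0: "(pi :: real) \<noteq> 0" by simp
  show ?thesis unfolding e1 e2 L2 e6 e5 using t0 pi0
    by (simp add: field_simps power2_eq_square)
qed


theorem mainTheorem2:
  fixes \<omega> :: "'m::finite \<Rightarrow> 'm \<Rightarrow> int"
    and \<sigma> :: "int^'m \<Rightarrow> complex"
    and \<Omega> :: "int^'m \<Rightarrow> rat"
    and U :: "(complex^'m) set"
    and X :: "int^'m \<Rightarrow> complex^'m \<Rightarrow> complex^'m \<Rightarrow> complex \<Rightarrow> complex"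
    and W :: "complex^'m \<Rightarrow> complex^'m \<Rightarrow> complex"
  assumes skew: "\<forall>a b. \<omega> a b = - \<omega> b a"
    and invertible: "det (\<chi> a. \<chi> b. real_of_int (\<omega> a b)) \<noteq> 0"
    and sigma_nz: "\<forall>g. \<sigma> g \<noteq> 0"
    and sigma_qr: "\<forall>g h. \<sigma> g * \<sigma> h = (-1) powi (pairing \<omega> g h) * \<sigma> (g + h)"
    and U_open: "open U"
    and Z_nz: "\<forall>z\<in>U. \<forall>g\<in>Gstar. \<Omega> g \<noteq> 0 \<longrightarrow> Zc z g \<noteq> 0"
    and TBA: "\<forall>z\<in>U. \<forall>\<theta> g t. adm \<omega> \<Omega> z g t \<longrightarrow>
               X g z \<theta> t = Xsf \<sigma> z \<theta> g t * exp (LinOp \<omega> \<Omega> z (\<lambda>h. X h z \<theta>) g t)"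
    \<comment> \<open>standing assumption: genericity (integrands of W on l_gamma are governed by the TBA system)\<close>
    and generic: "\<forall>z\<in>U. \<forall>g\<in>Gstar. \<Omega> g \<noteq> 0 \<longrightarrow> (\<forall>t. onray (Zc z g) t \<longrightarrow> adm \<omega> \<Omega> z g t)"
    \<comment> \<open>standing assumption: differentiation of the TBA system under sums and integrals\<close>
    and dX_theta: "\<forall>z\<in>U. \<forall>\<theta> g t a. adm \<omega> \<Omega> z g t \<longrightarrow>
               ((\<lambda>w. X g z (vupd \<theta> a w) t) has_field_derivative
                  X g z \<theta> t * (2 * pi * \<i> * of_int (g$a) + LinOp \<omega> \<Omega> z (\<lambda>h. dthX a X h z \<theta>) g t))
               (at (\<theta>$a))"
    and dX_z: "\<forall>z\<in>U. \<forall>\<theta> g t a. adm \<omega> \<Omega> z g t \<longrightarrow>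
               ((\<lambda>w. X g (vupd z a w) \<theta> t) has_field_derivative
                  X g z \<theta> t * (- 2 * pi * \<i> * of_int (g$a) / t + LinOp \<omega> \<Omega> z (\<lambda>h. dzX a X h z \<theta>) g t))
               (at (z$a))"
    \<comment> \<open>standing assumption: differentiation of W and of the derived sums under sums and integrals\<close>
    and dW_theta: "\<forall>z\<in>U. \<forall>\<theta> a.
               ((\<lambda>w. W z (vupd \<theta> a w)) has_field_derivative
                  (1 / (2 * pi * \<i>)) * Sfun \<Omega> z (\<lambda>g t. dthX a X g z \<theta> t / t^2)
                  - (1 / (2 * (2 * pi * \<i>)^2)) *
                    (Dfun \<omega> \<Omega> z (\<lambda>g. dthX a X g z \<theta>) (\<lambda>g. X g z \<theta>)
                     + Dfun \<omega> \<Omega> z (\<lambda>g. X g z \<theta>) (\<lambda>g. dthX a X g z \<theta>)))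
               (at (\<theta>$a))"
    and dW_z: "\<forall>z\<in>U. \<forall>\<theta> a.
               ((\<lambda>w. W (vupd z a w) \<theta>) has_field_derivative
                  (1 / (2 * pi * \<i>)) * Sfun \<Omega> z (\<lambda>g t. dzX a X g z \<theta> t / t^2)
                  - (1 / (2 * (2 * pi * \<i>)^2)) *
                    (Dfun \<omega> \<Omega> z (\<lambda>g. dzX a X g z \<theta>) (\<lambda>g. X g z \<theta>)
                     + Dfun \<omega> \<Omega> z (\<lambda>g. X g z \<theta>) (\<lambda>g. dzX a X g z \<theta>)))
               (at (z$a))"
    and dS: "\<forall>z\<in>U. \<forall>\<theta> a b.
               ((\<lambda>w. Sfun \<Omega> z (\<lambda>g t. of_int (g$a) * X g z (vupd \<theta> b w) t / t^2)) has_field_derivative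
                  Sfun \<Omega> z (\<lambda>g t. of_int (g$a) * dthX b X g z \<theta> t / t^2)) (at (\<theta>$b)) \<and>
               ((\<lambda>w. Sfun \<Omega> (vupd z b w) (\<lambda>g t. of_int (g$a) * X g (vupd z b w) \<theta> t / t^2)) has_field_derivative
                  Sfun \<Omega> z (\<lambda>g t. of_int (g$a) * dzX b X g z \<theta> t / t^2)) (at (z$b)) \<and>
               ((\<lambda>w. Sfun \<Omega> z (\<lambda>g t. of_int (g$a) * X g z (vupd \<theta> b w) t / t^3)) has_field_derivative
                  Sfun \<Omega> z (\<lambda>g t. of_int (g$a) * dthX b X g z \<theta> t / t^3)) (at (\<theta>$b))"
    \<comment> \<open>standing assumption: commutation of partial derivatives of W\<close>
    and mixed: "\<forall>z\<in>U. \<forall>\<theta> a b. dth a (dth b W) z \<theta> = dth b (dth a W) z \<theta> \<and>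
                                 dz a (dth b W) z \<theta> = dth b (dz a W) z \<theta>"
    \<comment> \<open>standing assumption: absolute convergence of all sums and integrals\<close>
    and abs_conv: "\<forall>z\<in>U. \<forall>\<theta> a. \<forall>Y\<in>{X, dthX a X, dzX a X}.
               abs_single \<Omega> z (\<lambda>g t. Y g z \<theta> t / t^2) \<and>
               abs_single \<Omega> z (\<lambda>g t. Y g z \<theta> t / t^3) \<and>
               abs_double \<omega> \<Omega> z (\<lambda>g. X g z \<theta>) (\<lambda>g. Y g z \<theta>) \<and>
               abs_double \<omega> \<Omega> z (\<lambda>g. Y g z \<theta>) (\<lambda>g. X g z \<theta>) \<and>
               (\<forall>g t. adm \<omega> \<Omega> z g t \<longrightarrow>
                  abs_lin \<omega> \<Omega> z g t (\<lambda>h. Y h z \<theta>) \<and>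
                  abs_lin \<omega> \<Omega> z g t (\<lambda>h t'. Y h z \<theta> t' / t'))"
    \<comment> \<open>standing assumption: the linearized integral equation is inverted by its iterated series,
        so its homogeneous version has only the trivial solution\<close>
    and inversion: "\<forall>z\<in>U. \<forall>\<theta>. \<forall>Y. (\<forall>g t. adm \<omega> \<Omega> z g t \<longrightarrow>
                  abs_lin \<omega> \<Omega> z g t Y \<and> Y g t = X g z \<theta> t * LinOp \<omega> \<Omega> z Y g t)
               \<longrightarrow> (\<forall>g t. adm \<omega> \<Omega> z g t \<longrightarrow> Y g t = 0)"
    and W_def: "W = Wfun \<omega> \<Omega> X"
  shows "(\<forall>z\<in>U. \<forall>\<theta> a b.
            dz a (dth b W) z \<theta> - dz b (dth a W) z \<theta> =
            1 / (2 * pi)^2 * (\<Sum>c\<in>UNIV. \<Sum>d\<in>UNIV.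
               of_int (\<omega> c d) * dth a (dth c W) z \<theta> * dth b (dth d W) z \<theta>))
       \<and> (\<forall>z\<in>U. \<forall>\<theta> g t a. adm \<omega> \<Omega> z g t \<longrightarrow>
            dzX a X g z \<theta> t + (1 / t) * dthX a X g z \<theta> t
            - 1 / (2 * pi)^2 * (\<Sum>b\<in>UNIV. \<Sum>c\<in>UNIV.
               of_int (\<omega> b c) * dth a (dth b W) z \<theta> * dthX c X g z \<theta> t) = 0)"
proof -
  have admray: "adm \<omega> \<Omega> z g (\<i> * Zc z g * of_real u)"
    if "z \<in> U" "g \<in> Gstar" "\<Omega> g \<noteq> 0" "u > 0" for z g u
    using generic that onray_pt by blast
  have dthX_eq: "dthX a X g z \<theta> t = X g z \<theta> t * (2 * pi * \<i> * of_int (g$a) + LinOp \<omega> \<Omega> z (\<lambda>h. dthX a X h z \<theta>) g t)"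
    if "z \<in> U" "adm \<omega> \<Omega> z g t" for z \<theta> g t a
    unfolding dthX_def[of a X g z \<theta> t] dth_def using dX_theta that by (blast intro: DERIV_imp_deriv)
  have dzX_eq: "dzX a X g z \<theta> t = X g z \<theta> t * (- 2 * pi * \<i> * of_int (g$a) / t + LinOp \<omega> \<Omega> z (\<lambda>h. dzX a X h z \<theta>) g t)"
    if "z \<in> U" "adm \<omega> \<Omega> z g t" for z \<theta> g t a
    unfolding dzX_def[of a X g z \<theta> t] dz_def using dX_z that by (blast intro: DERIV_imp_deriv)
  have W1: "dth d W z \<theta> = Sfun \<Omega> z (\<lambda>g t. of_int (g$d) * X g z \<theta> t / t^2)" if z: "z \<in> U" for z \<theta> d
  proof -
    have ac: "abs_single \<Omega> z (\<lambda>g t. Y g z \<theta> t / t^2) \<and> abs_single \<Omega> z (\<lambda>g t. Y g z \<theta> t / t^3) \<and>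
               abs_double \<omega> \<Omega> z (\<lambda>g. X g z \<theta>) (\<lambda>g. Y g z \<theta>) \<and>
               abs_double \<omega> \<Omega> z (\<lambda>g. Y g z \<theta>) (\<lambda>g. X g z \<theta>)" if "Y \<in> {X, dthX d X, dzX d X}" for Y
      using abs_conv z that by blast
    have "dth d W z \<theta> = (1 / (2 * pi * \<i>)) * Sfun \<Omega> z (\<lambda>g t. dthX d X g z \<theta> t / t^2)
                  - (1 / (2 * (2 * pi * \<i>)^2)) *
                    (Dfun \<omega> \<Omega> z (\<lambda>g. dthX d X g z \<theta>) (\<lambda>g. X g z \<theta>)
                     + Dfun \<omega> \<Omega> z (\<lambda>g. X g z \<theta>) (\<lambda>g. dthX d X g z \<theta>))"
      unfolding dth_def using dW_theta z by (blast intro: DERIV_imp_deriv)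
    also have "\<dots> = (1 / (2 * pi * \<i>)) * Sfun \<Omega> z (\<lambda>g t. (2 * pi * \<i> * of_int (g$d)) * X g z \<theta> t / t^2)"
    proof (rule core[where X="\<lambda>g. X g z \<theta>" and Y="\<lambda>g. dthX d X g z \<theta>" and \<kappa>="\<lambda>g t. 2 * pi * \<i> * of_int (g$d)"])
      show "\<forall>a b. \<omega> a b = - \<omega> b a" by (rule skew)
      have acD: "abs_single \<Omega> z (\<lambda>g t. dthX d X g z \<theta> t / t^2) \<and> abs_single \<Omega> z (\<lambda>g t. dthX d X g z \<theta> t / t^3) \<and>
               abs_double \<omega> \<Omega> z (\<lambda>g. X g z \<theta>) (\<lambda>g. dthX d X g z \<theta>) \<and>
               abs_double \<omega> \<Omega> z (\<lambda>g. dthX d X g z \<theta>) (\<lambda>g. X g z \<theta>)"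
        by (rule ac) simp
      have acX: "abs_single \<Omega> z (\<lambda>g t. X g z \<theta> t / t^2)"
        using ac[of X] by simp
      show "abs_double \<omega> \<Omega> z (\<lambda>g. X g z \<theta>) (\<lambda>g. dthX d X g z \<theta>)" using acD by (elim conjE)
      show "abs_double \<omega> \<Omega> z (\<lambda>g. dthX d X g z \<theta>) (\<lambda>g. X g z \<theta>)" using acD by (elim conjE)
      show "genok z (\<lambda>g. of_rat (\<Omega> g)) (\<lambda>g t. dthX d X g z \<theta> t / t^2)"
        using acD by (elim conjE) (rule abs_single_genok1)
      have "genok z (\<lambda>g. of_rat (\<Omega> g)) (\<lambda>g t. of_int (g$d) * (X g z \<theta> t / t^2))"
        by (rule gen_wt(2)[OF acX])
      from GS_cmult[OF this, of "2 * pi * \<i>"]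
      show "genok z (\<lambda>g. of_rat (\<Omega> g)) (\<lambda>g t. (2 * pi * \<i> * of_int (g$d)) * X g z \<theta> t / t^2)"
        by (simp add: mult.assoc)
    next
      fix g u assume "g \<in> Gstar" "\<Omega> g \<noteq> 0" "(u::real) > 0"
      then show "dthX d X g z \<theta> (\<i> * Zc z g * of_real u) = X g z \<theta> (\<i> * Zc z g * of_real u) *
         (2 * pi * \<i> * of_int (g$d) + LinOp \<omega> \<Omega> z (\<lambda>g. dthX d X g z \<theta>) g (\<i> * Zc z g * of_real u))"
        using dthX_eq admray z by blast
    qed
    also have "\<dots> = Sfun \<Omega> z (\<lambda>g t. of_int (g$d) * X g z \<theta> t / t^2)"
      using GS_cmult_eq[of z "\<lambda>g. of_rat (\<Omega> g)" "2 * pi * \<i>" "\<lambda>g t. of_int (g$d) * X g z \<theta> t / t^2"]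
      unfolding Sfun_GS by (simp add: mult.assoc)
    finally show ?thesis .
  qed

  have W2: "dz a W z \<theta> = - Sfun \<Omega> z (\<lambda>g t. of_int (g$a) * X g z \<theta> t / t^3)" if z: "z \<in> U" for z \<theta> a
  proof -
    have ac: "abs_single \<Omega> z (\<lambda>g t. Y g z \<theta> t / t^2) \<and> abs_single \<Omega> z (\<lambda>g t. Y g z \<theta> t / t^3) \<and>
               abs_double \<omega> \<Omega> z (\<lambda>g. X g z \<theta>) (\<lambda>g. Y g z \<theta>) \<and>
               abs_double \<omega> \<Omega> z (\<lambda>g. Y g z \<theta>) (\<lambda>g. X g z \<theta>)" if "Y \<in> {X, dthX a X, dzX a X}" for Y
      using abs_conv z that by blast
    have acD: "abs_single \<Omega> z (\<lambda>g t. dzX a X g z \<theta> t / t^2) \<and> abs_single \<Omega> z (\<lambda>g t. dzX a X g z \<theta> t / t^3) \<and>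
               abs_double \<omega> \<Omega> z (\<lambda>g. X g z \<theta>) (\<lambda>g. dzX a X g z \<theta>) \<and>
               abs_double \<omega> \<Omega> z (\<lambda>g. dzX a X g z \<theta>) (\<lambda>g. X g z \<theta>)"
      by (rule ac) simp
    have acX: "abs_single \<Omega> z (\<lambda>g t. X g z \<theta> t / t^3)"
      using ac[of X] by simp
    have kk: "(\<lambda>g t. (- 2 * pi * \<i> * of_int (g$a) / t) * X g z \<theta> t / t^2) =
        (\<lambda>g t. (- (2 * pi * \<i>)) * (of_int (g$a) * (X g z \<theta> t / t^3)))"
    proof (intro ext)
      fix g and t :: complex
      show "(- 2 * pi * \<i> * of_int (g$a) / t) * X g z \<theta> t / t^2 = (- (2 * pi * \<i>)) * (of_int (g$a) * (X g z \<theta> t / t^3))"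
        by (cases "t = 0") (simp_all add: field_simps power2_eq_square power3_eq_cube)
    qed
    have "dz a W z \<theta> = (1 / (2 * pi * \<i>)) * Sfun \<Omega> z (\<lambda>g t. dzX a X g z \<theta> t / t^2)
                  - (1 / (2 * (2 * pi * \<i>)^2)) *
                    (Dfun \<omega> \<Omega> z (\<lambda>g. dzX a X g z \<theta>) (\<lambda>g. X g z \<theta>)
                     + Dfun \<omega> \<Omega> z (\<lambda>g. X g z \<theta>) (\<lambda>g. dzX a X g z \<theta>))"
      unfolding dz_def using dW_z z by (blast intro: DERIV_imp_deriv)
    also have "\<dots> = (1 / (2 * pi * \<i>)) * Sfun \<Omega> z (\<lambda>g t. (- 2 * pi * \<i> * of_int (g$a) / t) * X g z \<theta> t / t^2)"
    proof (rule core[where X="\<lambda>g. X g z \<theta>" and Y="\<lambda>g. dzX a X g z \<theta>" and \<kappa>="\<lambda>g t. - 2 * pi * \<i> * of_int (g$a) / t"])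
      show "\<forall>a b. \<omega> a b = - \<omega> b a" by (rule skew)
      show "abs_double \<omega> \<Omega> z (\<lambda>g. X g z \<theta>) (\<lambda>g. dzX a X g z \<theta>)" using acD by (elim conjE)
      show "abs_double \<omega> \<Omega> z (\<lambda>g. dzX a X g z \<theta>) (\<lambda>g. X g z \<theta>)" using acD by (elim conjE)
      show "genok z (\<lambda>g. of_rat (\<Omega> g)) (\<lambda>g t. dzX a X g z \<theta> t / t^2)"
        using acD by (elim conjE) (rule abs_single_genok1)
      have "genok z (\<lambda>g. of_rat (\<Omega> g)) (\<lambda>g t. of_int (g$a) * (X g z \<theta> t / t^3))"
        by (rule gen_wt(2)[OF acX])
      from GS_cmult[OF this, of "- (2 * pi * \<i>)"]
      show "genok z (\<lambda>g. of_rat (\<Omega> g)) (\<lambda>g t. (- 2 * pi * \<i> * of_int (g$a) / t) * X g z \<theta> t / t^2)"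
        unfolding kk .
    next
      fix g u assume "g \<in> Gstar" "\<Omega> g \<noteq> 0" "(u::real) > 0"
      then show "dzX a X g z \<theta> (\<i> * Zc z g * of_real u) = X g z \<theta> (\<i> * Zc z g * of_real u) *
         (- 2 * pi * \<i> * of_int (g$a) / (\<i> * Zc z g * of_real u) + LinOp \<omega> \<Omega> z (\<lambda>g. dzX a X g z \<theta>) g (\<i> * Zc z g * of_real u))"
        using dzX_eq admray z by blast
    qed
    also have "\<dots> = - Sfun \<Omega> z (\<lambda>g t. of_int (g$a) * X g z \<theta> t / t^3)"
      unfolding kk Sfun_GS GS_cmult_eq by simp
    finally show ?thesis .
  qed
  have W3: "dth a (dth d W) z \<theta> = Sfun \<Omega> z (\<lambda>g t. of_int (g$d) * dthX a X g z \<theta> t / t^2)" if z: "z \<in> U" for z \<theta> a d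
  proof -
    have e: "(\<lambda>w. dth d W z (vupd \<theta> a w)) = (\<lambda>w. Sfun \<Omega> z (\<lambda>g t. of_int (g$d) * X g z (vupd \<theta> a w) t / t^2))"
      by (rule ext) (rule W1[OF z])
    have "((\<lambda>w. Sfun \<Omega> z (\<lambda>g t. of_int (g$d) * X g z (vupd \<theta> a w) t / t^2)) has_field_derivative
                  Sfun \<Omega> z (\<lambda>g t. of_int (g$d) * dthX a X g z \<theta> t / t^2)) (at (\<theta>$a))"
      using dS z by blast
    then show ?thesis unfolding dth_def[of a] e by (rule DERIV_imp_deriv)
  qed
  have W4: "dth a (dz b W) z \<theta> = - Sfun \<Omega> z (\<lambda>g t. of_int (g$b) * dthX a X g z \<theta> t / t^3)" if z: "z \<in> U" for z \<theta> a b
  proof -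
    have e: "(\<lambda>w. dz b W z (vupd \<theta> a w)) = (\<lambda>w. - Sfun \<Omega> z (\<lambda>g t. of_int (g$b) * X g z (vupd \<theta> a w) t / t^3))"
      by (rule ext) (rule W2[OF z])
    have "((\<lambda>w. Sfun \<Omega> z (\<lambda>g t. of_int (g$b) * X g z (vupd \<theta> a w) t / t^3)) has_field_derivative
                  Sfun \<Omega> z (\<lambda>g t. of_int (g$b) * dthX a X g z \<theta> t / t^3)) (at (\<theta>$a))"
      using dS z by blast
    then have "((\<lambda>w. - Sfun \<Omega> z (\<lambda>g t. of_int (g$b) * X g z (vupd \<theta> a w) t / t^3)) has_field_derivative
                  - Sfun \<Omega> z (\<lambda>g t. of_int (g$b) * dthX a X g z \<theta> t / t^3)) (at (\<theta>$a))"
      by (rule DERIV_minus)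
    then show ?thesis unfolding dth_def[of a] e by (rule DERIV_imp_deriv)
  qed
  have W5: "dz a (dth b W) z \<theta> = Sfun \<Omega> z (\<lambda>g t. of_int (g$b) * dzX a X g z \<theta> t / t^2)" if z: "z \<in> U" for z \<theta> a b
  proof -
    define S where "S = (\<lambda>w. vupd z a w) -` U"
    have So: "open S" unfolding S_def by (rule open_vimage[OF U_open vupd_cont])
    have Sz: "z$a \<in> S" unfolding S_def using z vupd_self[of z a] by simp
    have d: "((\<lambda>w. Sfun \<Omega> (vupd z a w) (\<lambda>g t. of_int (g$b) * X g (vupd z a w) \<theta> t / t^2)) has_field_derivative
                  Sfun \<Omega> z (\<lambda>g t. of_int (g$b) * dzX a X g z \<theta> t / t^2)) (at (z$a))"
      using dS z by blast
    have "((\<lambda>w. dth b W (vupd z a w) \<theta>) has_field_derivative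
                  Sfun \<Omega> z (\<lambda>g t. of_int (g$b) * dzX a X g z \<theta> t / t^2)) (at (z$a))"
    proof (rule has_field_derivative_transform_within_open[OF d So Sz])
      fix w assume "w \<in> S"
      then have "vupd z a w \<in> U" unfolding S_def by simp
      then show "Sfun \<Omega> (vupd z a w) (\<lambda>g t. of_int (g$b) * X g (vupd z a w) \<theta> t / t^2) = dth b W (vupd z a w) \<theta>"
        using W1 by simp
    qed
    then show ?thesis unfolding dz_def[of a] by (rule DERIV_imp_deriv)
  qed

  have Lax: "dzX a X g z \<theta> t + (1 / t) * dthX a X g z \<theta> t
            - 1 / (2 * pi)^2 * (\<Sum>b\<in>UNIV. \<Sum>c\<in>UNIV.
               of_int (\<omega> b c) * dth a (dth b W) z \<theta> * dthX c X g z \<theta> t) = 0"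
    if z: "z \<in> U" and adm0: "adm \<omega> \<Omega> z g t" for z \<theta> g t a
  proof -
    define \<beta> where "\<beta> c = (\<Sum>b\<in>UNIV. of_int (\<omega> b c) * dth a (dth b W) z \<theta>)" for c
    define e :: complex where "e = - (1 / (2 * pi)^2)"
    define Yl where "Yl = (\<lambda>h s. dzX a X h z \<theta> s + dthX a X h z \<theta> s / s + e * (\<Sum>c\<in>UNIV. \<beta> c * dthX c X h z \<theta> s))"
    have sumeq: "(\<Sum>b\<in>UNIV. \<Sum>c\<in>UNIV. of_int (\<omega> b c) * dth a (dth b W) z \<theta> * D c) = (\<Sum>c\<in>UNIV. \<beta> c * D c)" for D
      unfolding \<beta>_def sum_distrib_right by (rule sum.swap)
    have Yl_eq: "dzX a X h z \<theta> s + (1 / s) * dthX a X h z \<theta> s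
            - 1 / (2 * pi)^2 * (\<Sum>b\<in>UNIV. \<Sum>c\<in>UNIV.
               of_int (\<omega> b c) * dth a (dth b W) z \<theta> * dthX c X h z \<theta> s) = Yl h s" for h s
      unfolding Yl_def sumeq e_def by simp
    have acl: "abs_lin \<omega> \<Omega> z g' t' (\<lambda>h. Y h z \<theta>) \<and> abs_lin \<omega> \<Omega> z g' t' (\<lambda>h t'. Y h z \<theta> t' / t')"
      if "Y \<in> {X, dthX a' X, dzX a' X}" "adm \<omega> \<Omega> z g' t'" for Y a' g' t'
      using abs_conv z that by blast
    have acs: "abs_single \<Omega> z (\<lambda>g t. dthX a X g z \<theta> t / t^2)"
      using abs_conv z by blast
    have inv: "(\<forall>g t. adm \<omega> \<Omega> z g t \<longrightarrow> abs_lin \<omega> \<Omega> z g t Yl \<and> Yl g t = X g z \<theta> t * LinOp \<omega> \<Omega> z Yl g t)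
               \<longrightarrow> (\<forall>g t. adm \<omega> \<Omega> z g t \<longrightarrow> Yl g t = 0)"
      using inversion z by blast
    have "\<forall>g t. adm \<omega> \<Omega> z g t \<longrightarrow> Yl g t = 0"
    proof (rule mp[OF inv])
      show "\<forall>g t. adm \<omega> \<Omega> z g t \<longrightarrow> abs_lin \<omega> \<Omega> z g t Yl \<and> Yl g t = X g z \<theta> t * LinOp \<omega> \<Omega> z Yl g t"
      proof (intro allI impI)
        fix g' t' assume adm': "adm \<omega> \<Omega> z g' t'"
        have t0: "t' \<noteq> 0" using adm' unfolding adm_def by blast
        have aA: "abs_lin \<omega> \<Omega> z g' t' (\<lambda>h. dzX a X h z \<theta>)" using acl[OF _ adm', of "dzX a X" a] by simp
        have aB: "abs_lin \<omega> \<Omega> z g' t' (\<lambda>h s. dthX a X h z \<theta> s / s)" using acl[OF _ adm', of "dthX a X" a] by simp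
        have aC: "abs_lin \<omega> \<Omega> z g' t' (\<lambda>h. dthX c X h z \<theta>)" for c using acl[OF _ adm', of "dthX c X" c] by simp
        note comb = LinOp_comb[where C="\<lambda>c h. dthX c X h z \<theta>" and e=e and \<beta>=\<beta>, OF aA aB aC]
        have YlF: "Yl = (\<lambda>h s. dzX a X h z \<theta> s + dthX a X h z \<theta> s / s + e * (\<Sum>c\<in>UNIV. \<beta> c * dthX c X h z \<theta> s))"
          unfolding Yl_def ..
        show "abs_lin \<omega> \<Omega> z g' t' Yl \<and> Yl g' t' = X g' z \<theta> t' * LinOp \<omega> \<Omega> z Yl g' t'"
        proof
          show "abs_lin \<omega> \<Omega> z g' t' Yl" unfolding YlF using comb by blast
          have LY: "LinOp \<omega> \<Omega> z Yl g' t' = LinOp \<omega> \<Omega> z (\<lambda>h. dzX a X h z \<theta>) g' t' + LinOp \<omega> \<Omega> z (\<lambda>h s. dthX a X h z \<theta> s / s) g' t'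
              + e * (\<Sum>c\<in>UNIV. \<beta> c * LinOp \<omega> \<Omega> z (\<lambda>h. dthX c X h z \<theta>) g' t')"
            unfolding YlF using comb by blast
          have e4: "(1 / t') * LinOp \<omega> \<Omega> z (\<lambda>h. dthX a X h z \<theta>) g' t' = LinOp \<omega> \<Omega> z (\<lambda>h s. dthX a X h z \<theta> s / s) g' t' +
            (1 / (2 * pi * \<i>)) * (\<Sum>c\<in>UNIV. \<Sum>d\<in>UNIV. of_int (g'$c) * of_int (\<omega> c d) *
               Sfun \<Omega> z (\<lambda>h s. of_int (h$d) * dthX a X h z \<theta> s / s^2))"
          proof -
            have Znz: "\<forall>h\<in>Gstar. \<Omega> h \<noteq> 0 \<longrightarrow> Zc z h \<noteq> 0" using Z_nz z by blast
            show ?thesis by (rule lin_t[where D="\<lambda>h. dthX a X h z \<theta>", OF Znz adm' aB acs])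
          qed
          have Wad: "Sfun \<Omega> z (\<lambda>h s. of_int (h$d) * dthX a X h z \<theta> s / s^2) = dth a (dth d W) z \<theta>" for d
            using W3[OF z] by simp
          have sk: "(of_int (\<omega> b c) :: complex) = - of_int (\<omega> c b)" for b c
          proof -
            have "\<omega> b c = - \<omega> c b" using skew by blast
            then show ?thesis by simp
          qed
          have e5: "(\<Sum>c\<in>UNIV. \<Sum>d\<in>UNIV. of_int (g'$c) * of_int (\<omega> c d) * dth a (dth d W) z \<theta>) =
             - (\<Sum>c\<in>UNIV. \<beta> c * of_int (g'$c))"
          proof -
            have "(\<Sum>c\<in>UNIV. \<beta> c * of_int (g'$c)) = (\<Sum>c\<in>UNIV. \<Sum>d\<in>UNIV. of_int (\<omega> d c) * dth a (dth d W) z \<theta> * of_int (g'$c))"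
              unfolding \<beta>_def sum_distrib_right ..
            also have "\<dots> = (\<Sum>c\<in>UNIV. \<Sum>d\<in>UNIV. - (of_int (g'$c) * of_int (\<omega> c d) * dth a (dth d W) z \<theta>))"
            proof (intro sum.cong refl)
              fix c d
              show "of_int (\<omega> d c) * dth a (dth d W) z \<theta> * of_int (g'$c) = - (of_int (g'$c) * of_int (\<omega> c d) * dth a (dth d W) z \<theta>)"
                unfolding sk[of d c] by (simp add: mult_ac)
            qed
            also have "\<dots> = - (\<Sum>c\<in>UNIV. \<Sum>d\<in>UNIV. of_int (g'$c) * of_int (\<omega> c d) * dth a (dth d W) z \<theta>)"
              by (simp add: sum_negf)
            finally show ?thesis by simp
          qed
          have e6: "(\<Sum>c\<in>UNIV. \<beta> c * dthX c X g' z \<theta> t') = X g' z \<theta> t' * (2 * pi * \<i>) * (\<Sum>c\<in>UNIV. \<beta> c * of_int (g'$c))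
              + X g' z \<theta> t' * (\<Sum>c\<in>UNIV. \<beta> c * LinOp \<omega> \<Omega> z (\<lambda>h. dthX c X h z \<theta>) g' t')"
            unfolding dthX_eq[OF z adm'] by (simp add: sum_distrib_left distrib_left sum.distrib mult_ac)
          have fa: "dzX a X g' z \<theta> t' + (1 / t') * dthX a X g' z \<theta> t' - 1 / (2 * pi)^2 * (\<Sum>c\<in>UNIV. \<beta> c * dthX c X g' z \<theta> t')
             = X g' z \<theta> t' * (LinOp \<omega> \<Omega> z (\<lambda>h. dzX a X h z \<theta>) g' t' + LinOp \<omega> \<Omega> z (\<lambda>h s. dthX a X h z \<theta> s / s) g' t'
                 - 1 / (2 * pi)^2 * (\<Sum>c\<in>UNIV. \<beta> c * LinOp \<omega> \<Omega> z (\<lambda>h. dthX c X h z \<theta>) g' t'))"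
            by (rule final_alg[OF t0 dzX_eq[OF z adm'] dthX_eq[OF z adm'] e4[unfolded Wad] e5 e6])
          show "Yl g' t' = X g' z \<theta> t' * LinOp \<omega> \<Omega> z Yl g' t'"
            unfolding LY using fa unfolding Yl_def e_def by simp
        qed
      qed
    qed
    then have "Yl g t = 0" using adm0 by blast
    then show ?thesis using Yl_eq by simp
  qed

  have Heav: "dz a (dth b W) z \<theta> - dz b (dth a W) z \<theta> =
            1 / (2 * pi)^2 * (\<Sum>c\<in>UNIV. \<Sum>d\<in>UNIV.
               of_int (\<omega> c d) * dth a (dth c W) z \<theta> * dth b (dth d W) z \<theta>)"
    if z: "z \<in> U" for z \<theta> a b
  proof -
    define \<beta> where "\<beta> c = (\<Sum>b\<in>UNIV. of_int (\<omega> b c) * dth a (dth b W) z \<theta>)" for c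
    define k :: complex where "k = 1 / (2 * pi)^2"
    have sumeq: "(\<Sum>b\<in>UNIV. \<Sum>c\<in>UNIV. of_int (\<omega> b c) * dth a (dth b W) z \<theta> * D c) = (\<Sum>c\<in>UNIV. \<beta> c * D c)" for D
      unfolding \<beta>_def sum_distrib_right by (rule sum.swap)
    have asA: "abs_single \<Omega> z (\<lambda>g t. dthX a X g z \<theta> t / t^3)" using abs_conv z by blast
    have asC: "abs_single \<Omega> z (\<lambda>g t. dthX c X g z \<theta> t / t^2)" for c using abs_conv z by blast
    have gA: "genok z (\<lambda>g. of_rat (\<Omega> g)) (\<lambda>g t. of_int (g$b) * dthX a X g z \<theta> t / t^3)"
      using gen_wt(2)[OF asA, of b] by simp
    have gC: "genok z (\<lambda>g. of_rat (\<Omega> g)) (\<lambda>g t. of_int (g$b) * dthX c X g z \<theta> t / t^2)" for c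
      using gen_wt(2)[OF asC, of b] by simp
    have gA': "genok z (\<lambda>g. of_rat (\<Omega> g)) (\<lambda>g t. (-1) * (of_int (g$b) * dthX a X g z \<theta> t / t^3))"
      by (rule GS_cmult[OF gA])
    have sC: "genok z (\<lambda>g. of_rat (\<Omega> g)) (\<lambda>g t. \<Sum>c\<in>UNIV. \<beta> c * (of_int (g$b) * dthX c X g z \<theta> t / t^2)) \<and>
       GS z (\<lambda>g. of_rat (\<Omega> g)) (\<lambda>g t. \<Sum>c\<in>UNIV. \<beta> c * (of_int (g$b) * dthX c X g z \<theta> t / t^2)) =
       (\<Sum>c\<in>UNIV. GS z (\<lambda>g. of_rat (\<Omega> g)) (\<lambda>g t. \<beta> c * (of_int (g$b) * dthX c X g z \<theta> t / t^2)))"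
    proof (rule GS_sum)
      fix c :: 'm
      show "genok z (\<lambda>g. of_rat (\<Omega> g)) (\<lambda>g t. \<beta> c * (of_int (g$b) * dthX c X g z \<theta> t / t^2))"
        by (rule GS_cmult[OF gC])
    qed simp
    have gB': "genok z (\<lambda>g. of_rat (\<Omega> g)) (\<lambda>g t. k * (\<Sum>c\<in>UNIV. \<beta> c * (of_int (g$b) * dthX c X g z \<theta> t / t^2)))"
      by (rule GS_cmult[OF conjunct1[OF sC]])
    have "dz a (dth b W) z \<theta> = Sfun \<Omega> z (\<lambda>g t. of_int (g$b) * dzX a X g z \<theta> t / t^2)" by (rule W5[OF z])
    also have "\<dots> = GS z (\<lambda>g. of_rat (\<Omega> g)) (\<lambda>g t. (-1) * (of_int (g$b) * dthX a X g z \<theta> t / t^3) +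
        k * (\<Sum>c\<in>UNIV. \<beta> c * (of_int (g$b) * dthX c X g z \<theta> t / t^2)))"
      unfolding Sfun_GS
    proof (rule GS_cong)
      fix g :: "int^'m" and u :: real
      assume g: "g \<in> Gstar" "of_rat (\<Omega> g) \<noteq> (0::complex)" "u > 0"
      define t where "t = \<i> * Zc z g * of_real u"
      have "adm \<omega> \<Omega> z g t" unfolding t_def using admray[OF z g(1) _ g(3)] g(2) by simp
      from Lax[OF z this, where \<theta>=\<theta> and a=a]
      have hD: "dzX a X g z \<theta> t = - ((1 / t) * dthX a X g z \<theta> t) + k * (\<Sum>c\<in>UNIV. \<beta> c * dthX c X g z \<theta> t)"
        unfolding sumeq k_def by (simp add: algebra_simps)
      have t0: "t \<noteq> 0" using \<open>adm \<omega> \<Omega> z g t\<close> unfolding adm_def by blast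
      have sf: "(\<Sum>c\<in>UNIV. \<beta> c * (of_int (g$b) * dthX c X g z \<theta> t / t^2)) =
          of_int (g$b) * (\<Sum>c\<in>UNIV. \<beta> c * dthX c X g z \<theta> t) / t^2"
        by (simp add: sum_distrib_left sum_divide_distrib mult_ac)
      show "of_int (g$b) * dzX a X g z \<theta> t / t^2 = (-1) * (of_int (g$b) * dthX a X g z \<theta> t / t^3) +
        k * (\<Sum>c\<in>UNIV. \<beta> c * (of_int (g$b) * dthX c X g z \<theta> t / t^2))"
        unfolding sf hD using t0 by (simp add: field_simps power2_eq_square power3_eq_cube)
    qed
    also have "\<dots> = (-1) * Sfun \<Omega> z (\<lambda>g t. of_int (g$b) * dthX a X g z \<theta> t / t^3) +
        k * (\<Sum>c\<in>UNIV. \<beta> c * Sfun \<Omega> z (\<lambda>g t. of_int (g$b) * dthX c X g z \<theta> t / t^2))"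
      unfolding conjunct2[OF GS_add[OF gA' gB']] GS_cmult_eq conjunct2[OF sC] Sfun_GS ..
    finally have M: "dz a (dth b W) z \<theta> = (-1) * Sfun \<Omega> z (\<lambda>g t. of_int (g$b) * dthX a X g z \<theta> t / t^3) +
        k * (\<Sum>c\<in>UNIV. \<beta> c * Sfun \<Omega> z (\<lambda>g t. of_int (g$b) * dthX c X g z \<theta> t / t^2))" .
    have sa: "Sfun \<Omega> z (\<lambda>g t. of_int (g$b) * dthX a X g z \<theta> t / t^3) = - dz b (dth a W) z \<theta>"
      using W4[OF z, of a b \<theta>] mixed z by simp
    have sc: "Sfun \<Omega> z (\<lambda>g t. of_int (g$b) * dthX c X g z \<theta> t / t^2) = dth b (dth c W) z \<theta>" for c
      using W3[OF z, of c b \<theta>] mixed z by simp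
    have "dz a (dth b W) z \<theta> = dz b (dth a W) z \<theta> + k * (\<Sum>c\<in>UNIV. \<beta> c * dth b (dth c W) z \<theta>)"
      unfolding M sa sc by simp
    moreover have "(\<Sum>c\<in>UNIV. \<beta> c * dth b (dth c W) z \<theta>) = (\<Sum>c\<in>UNIV. \<Sum>d\<in>UNIV.
               of_int (\<omega> c d) * dth a (dth c W) z \<theta> * dth b (dth d W) z \<theta>)"
      unfolding \<beta>_def sum_distrib_right by (rule sum.swap[symmetric])
    ultimately show ?thesis unfolding k_def by simp
  qed
  show ?thesis using Lax Heav by blast
qed

end
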